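(* An input sequence $\bar{\mathbf{u}} = (\mathbf{u}_0,\ldots,\mathbf{u}_N) \in \bar{U}$ is a separating input (i.e. $Y_N^{[i]}(\bar{\mathbf{u}}) \cap Y_N^{[j]}(\bar{\mathbf{u}}) = \emptyset$ for every $i,j \in \mathbb{I}$, $i\neq j$) if and only if \[ \begin{bmatrix} \mathbf{N}(i,j) \\ \boldsymbol{\Omega}(i,j) \end{bmatrix} \bar{\mathbf{u}} \notin \mathcal{Y}(i,j) = \left\{ \begin{bmatrix} \mathbf{G}^Y_N(i,j) \\ \mathbf{A}^Y_N(i,j) \end{bmatrix} , \begin{bmatrix} \mathbf{c}^Y_N(i,j) \\ - \mathbf{b}^Y_N(i,j) \end{bmatrix} \right\} \] (a zonotope in generator–center form) for all $i,j \in \mathbb{I}$, $i \neq j$, where $\mathbf{N}(i,j) = \mathbf{F}^{[j]} \bar{\mathbf{H}}^{[j]} - \mathbf{F}^{[i]} \bar{\mathbf{H}}^{[i]} + [\mathbf{0} \;\; (\mathbf{D}^{[j]}-\mathbf{D}^{[i]})]$, $\boldsymbol{\Omega}(i,j) = [(\boldsymbol{\Omega}_N^{[i]})^T \; \mathbf{0} \; (\boldsymbol{\Omega}_N^{[j]})^T \; \mathbf{0}]^T$, and $\mathbf{G}^Y_N(i,j) = [ \mathbf{G}^{Y[i]}_N \;\; -\mathbf{G}^{Y[j]}_N ]$, $\mathbf{c}^Y_N(i,j) = \mathbf{c}^{Y[i]}_N(\bar{\mathbf{0}}) - \mathbf{c}^{Y[j]}_N(\bar{\mathbf{0}})$, $\mathbf{A}^Y_N(i,j)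 = \mathrm{blkdiag}(\mathbf{A}_N^{Y[i]}, \mathbf{A}_N^{Y[j]})$, $\mathbf{b}^Y_N(i,j) = [(\mathbf{b}_N^{Y[i]}(\bar{\mathbf{0}}))^T \;\; (\mathbf{b}_N^{Y[j]}(\bar{\mathbf{0}}))^T]^T$, with $\bar{\mathbf{0}}$ the zero input sequence.
   Context: Constrained zonotope notation: $\{\mathbf{G},\mathbf{c},\mathbf{A},\mathbf{b}\} = \{\mathbf{c}+\mathbf{G}\boldsymbol{\xi} : \|\boldsymbol{\xi}\|_\infty\le1,\ \mathbf{A}\boldsymbol{\xi}=\mathbf{b}\}$; a zonotope is $\{\mathbf{G},\mathbf{c}\}$. Consider $n_m$ linear descriptor models $i \in \mathbb{I} = \{1,\ldots,n_m\}$: $\mathbf{E}^{[i]}\mathbf{x}_k = \mathbf{A}^{[i]}\mathbf{x}_{k-1} + \mathbf{B}^{[i]}\mathbf{u}_{k-1} + \mathbf{B}_w^{[i]}\mathbf{w}_{k-1}$, $\mathbf{y}_k = \mathbf{C}^{[i]}\mathbf{x}_k + \mathbf{D}^{[i]}\mathbf{u}_k + \mathbf{D}_v^{[i]}\mathbf{v}_k$, with $\mathbf{x}_0 \in X_0$, $\mathbf{w}_k \in W$, $\mathbf{v}_k \in V = \{\mathbf{G}_v,\mathbf{c}_v,\mathbf{A}_v,\mathbf{b}_v\}$, $\mathbf{u}_k \in U$, $\bar{U} = U\times\cdots\times U$. For each $i$, with SVD $\mathbf{E}^{[i]} = \mathbf{U}^{[i]}\boldsymbol{\Sigma}^{[i]}(\mathbf{V}^{[i]})^T$,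 $\boldsymbol{\Sigma}^{[i]} = \mathrm{blkdiag}(\tilde{\boldsymbol{\Sigma}}^{[i]},\mathbf{0})$, $\mathbf{T}^{[i]} = ((\mathbf{V}^{[i]})^T)^{-1}$, define $[\tilde{\mathbf{A}}^{[i]};\check{\mathbf{A}}^{[i]}] = \mathrm{blkdiag}((\tilde{\boldsymbol{\Sigma}}^{[i]})^{-1},\mathbf{I})(\mathbf{U}^{[i]})^{-1}\mathbf{A}^{[i]}\mathbf{T}^{[i]}$, and analogously $\tilde{\mathbf{B}}^{[i]},\check{\mathbf{B}}^{[i]}$ from $\mathbf{B}^{[i]}$ and $\tilde{\mathbf{B}}_w^{[i]},\check{\mathbf{B}}_w^{[i]}$ from $\mathbf{B}_w^{[i]}$ (without right-multiplying by $\mathbf{T}^{[i]}$). With $\mathbf{z}_k = (\tilde{\mathbf{z}}_k,\check{\mathbf{z}}_k) = ((\mathbf{T}^{[i]})^{-1}\mathbf{x}_k,\mathbf{w}_k)$, the models become $\tilde{\mathbf{z}}_k = \tilde{\mathbf{A}}_z^{[i]}\mathbf{z}_{k-1} + \tilde{\mathbf{B}}^{[i]}\mathbf{u}_{k-1}$, $\mathbf{0} = \check{\mathbf{A}}_z^{[i]}\mathbf{z}_k + \check{\mathbf{B}}^{[i]}\mathbf{u}_k$, $\mathbf{y}_k = \mathbf{F}^{[i]}\mathbf{z}_k + \mathbf{D}^{[i]}\mathbf{u}_k + \mathbf{D}_v^{[i]}\mathbf{v}_k$, where $\tilde{\mathbf{A}}_z^{[i]} = [\tilde{\mathbf{A}}^{[i]}\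 \tilde{\mathbf{B}}_w^{[i]}]$, $\check{\mathbf{A}}_z^{[i]} = [\check{\mathbf{A}}^{[i]}\ \check{\mathbf{B}}_w^{[i]}]$, $\mathbf{F}^{[i]} = \mathbf{C}^{[i]}\mathbf{T}^{[i]}[\mathbf{I}_n\ \mathbf{0}]$. A known constrained zonotope $X_a$ satisfies $\mathbf{x}_k\in X_a$ for all $k$; $Z_a^{[i]} = (\mathbf{T}^{[i]})^{-1}X_a\times W = \{\mathbf{G}_a^{[i]},\mathbf{c}_a^{[i]},\mathbf{A}_a^{[i]},\mathbf{b}_a^{[i]}\}$ with $\check{\mathbf{c}}_a^{[i]},\check{\mathbf{G}}_a^{[i]}$ the rows corresponding to $\check{\mathbf{z}}$; $\{\mathbf{G}_z^{[i]},\mathbf{c}_z^{[i]},\mathbf{A}_z^{[i]},\mathbf{b}_z^{[i]}\} = (\mathbf{T}^{[i]})^{-1}X_0\times W$. The state reachable set is $Z_N^{[i]}(\bar{\mathbf{u}}) = \{\mathbf{G}_N^{[i]},\mathbf{c}_N^{[i]}(\bar{\mathbf{u}}),\mathbf{A}_N^{[i]},\mathbf{b}_N^{[i]}(\bar{\mathbf{u}})\}$ given by the recursion, for $k=1,\ldots,N$: $\mathbf{c}_k^{[i]} = [\tilde{\mathbf{A}}_z^{[i]}\mathbf{c}_{k-1}^{[i]} + \tilde{\mathbf{B}}^{[i]}\mathbf{u}_{k-1};\ \check{\mathbf{c}}_a^{[i]}]$, $\mathbf{G}_k^{[i]} = \begin{bmatrix}\tilde{\mathbf{A}}_z^{[i]}\mathbf{G}_{k-1}^{[i]}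 & \mathbf{0}\\ \mathbf{0} & \check{\mathbf{G}}_a^{[i]}\end{bmatrix}$, $\mathbf{A}_k^{[i]} = \begin{bmatrix}\mathrm{blkdiag}(\mathbf{A}_{k-1}^{[i]},\mathbf{A}_a^{[i]}) \\ \check{\mathbf{A}}_z^{[i]}\mathbf{G}_k^{[i]}\end{bmatrix}$, $\mathbf{b}_k^{[i]} = [\mathbf{b}_{k-1}^{[i]};\ \mathbf{b}_a^{[i]};\ -\check{\mathbf{A}}_z^{[i]}\mathbf{c}_k^{[i]} - \check{\mathbf{B}}^{[i]}\mathbf{u}_k]$, initialized with $\mathbf{G}_0^{[i]} = \mathbf{G}_z^{[i]}$, $\mathbf{c}_0^{[i]} = \mathbf{c}_z^{[i]}$, $\mathbf{A}_0^{[i]} = [\mathbf{A}_z^{[i]};\ \check{\mathbf{A}}_z^{[i]}\mathbf{G}_0^{[i]}]$, $\mathbf{b}_0^{[i]} = [\mathbf{b}_z^{[i]};\ -\check{\mathbf{A}}_z^{[i]}\mathbf{c}_0^{[i]} - \check{\mathbf{B}}^{[i]}\mathbf{u}_0]$. These are affine in $\bar{\mathbf{u}}$: $\mathbf{c}_N^{[i]}(\bar{\mathbf{u}}) = \mathbf{c}_N^{[i]}(\bar{\mathbf{0}}) + \mathbf{H}_N^{[i]}\bar{\mathbf{u}}$ and $\mathbf{b}_N^{[i]}(\bar{\mathbf{u}}) = \mathbf{b}_N^{[i]}(\bar{\mathbf{0}}) + \boldsymbol{\Omega}_N^{[i]}\bar{\mathbf{u}}$, where $\mathbf{H}_h^{[i]}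 = [\ \cdots\ \mathbf{M}^{h-m}[\tilde{\mathbf{B}}^{[i]};\mathbf{0}]\ \cdots\ \mathbf{0}\ \cdots]$ ($m=1,\ldots,h$, followed by $N-h+1$ zero blocks), $\mathbf{M} = [\tilde{\mathbf{A}}_z^{[i]};\mathbf{0}]$, $\mathbf{H}_0^{[i]} = \mathbf{0}$, $\bar{\mathbf{H}}^{[i]} = [(\mathbf{H}_0^{[i]})^T\ \cdots\ (\mathbf{H}_N^{[i]})^T]^T$, $\boldsymbol{\Omega}_N^{[i]} = \boldsymbol{\Gamma}_N^{[i]} + \boldsymbol{\Upsilon}_N^{[i]}\bar{\mathbf{H}}^{[i]}$, $\boldsymbol{\Upsilon}_N^{[i]} = \mathrm{blkdiag}([\mathbf{0};-\check{\mathbf{A}}_z^{[i]}],\ldots)$, $\boldsymbol{\Gamma}_N^{[i]} = \mathrm{blkdiag}([\mathbf{0};-\check{\mathbf{B}}^{[i]}],\ldots)$ ($N+1$ blocks each). The output reachable set is $Y_N^{[i]}(\bar{\mathbf{u}}) = \mathbf{F}^{[i]}Z_N^{[i]}(\bar{\mathbf{u}}) \oplus \mathbf{D}^{[i]}\mathbf{u}_N \oplus \mathbf{D}_v^{[i]}V = \{\mathbf{G}_N^{Y[i]},\mathbf{c}_N^{Y[i]}(\bar{\mathbf{u}}),\mathbf{A}_N^{Y[i]},\mathbf{b}_N^{Y[i]}(\bar{\mathbf{u}})\}$ with $\mathbf{c}_N^{Y[i]} = \mathbf{F}^{[i]}\mathbf{c}_N^{[i]}(\bar{\mathbf{u}})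 + \mathbf{D}^{[i]}\mathbf{u}_N + \mathbf{D}_v^{[i]}\mathbf{c}_v$, $\mathbf{G}_N^{Y[i]} = [\mathbf{F}^{[i]}\mathbf{G}_N^{[i]}\ \mathbf{G}_v]$, $\mathbf{A}_N^{Y[i]} = \mathrm{blkdiag}(\mathbf{A}_N^{[i]},\mathbf{A}_v)$, $\mathbf{b}_N^{Y[i]} = [\mathbf{b}_N^{[i]}(\bar{\mathbf{u}});\ \mathbf{b}_v]$. In $\mathbf{N}(i,j)$ the block $[\mathbf{0}\ (\mathbf{D}^{[j]}-\mathbf{D}^{[i]})]$ acts on the last input $\mathbf{u}_N$; the zero blocks in $\boldsymbol{\Omega}(i,j)$ correspond to the $\mathbf{b}_v$ rows. *)

theory Defs
  imports "Jordan_Normal_Form.Matrix"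
begin

section \<open>Block-matrix helpers\<close>

text \<open>Horizontal concatenation [A B] (A, B with the same number of rows).\<close>
definition hcat :: "real mat \<Rightarrow> real mat \<Rightarrow> real mat" where
  "hcat A B = four_block_mat A B (0\<^sub>m 0 (dim_col A)) (0\<^sub>m 0 (dim_col B))"

text \<open>Block diagonal blkdiag(A,B).\<close>
definition blkdiag :: "real mat \<Rightarrow> real mat \<Rightarrow> real mat" where
  "blkdiag A B = diag_block_mat [A, B]"

text \<open>[M_0 M_1 ... M_k] with nr rows, and [M_0; M_1; ...; M_k] with nc columns.\<close>
definition hcat_list :: "nat \<Rightarrow> real mat list \<Rightarrow> real mat" where
  "hcat_list nr Ms = foldr hcat Ms (0\<^sub>m nr 0)"

definition vcat_list :: "nat \<Rightarrow> real mat list \<Rightarrow> real mat" where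
  "vcat_list nc Ms = foldr (\<lambda>A B. A @\<^sub>r B) Ms (0\<^sub>m 0 nc)"

section \<open>Constrained zonotopes and zonotopes\<close>

text \<open>{G,c,A,b} = {c + G xi : ||xi||_inf \<le> 1, A xi = b}\<close>
definition czono :: "real mat \<Rightarrow> real vec \<Rightarrow> real mat \<Rightarrow> real vec \<Rightarrow> real vec set" where
  "czono G c A b = {c + G *\<^sub>v \<xi> | \<xi>. \<xi> \<in> carrier_vec (dim_col G) \<and>
       (\<forall>t < dim_col G. \<bar>\<xi> $ t\<bar> \<le> 1) \<and> A *\<^sub>v \<xi> = b}"

text \<open>{G,c} = {c + G xi : ||xi||_inf \<le> 1}\<close>
definition zono :: "real mat \<Rightarrow> real vec \<Rightarrow> real vec set" where
  "zono G c = {c + G *\<^sub>v \<xi> | \<xi>. \<xi> \<in> carrier_vec (dim_col G) \<and>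
       (\<forall>t < dim_col G. \<bar>\<xi> $ t\<bar> \<le> 1)}"

section \<open>Transformed descriptor models\<close>

text \<open>Data of model i after the SVD-based transformation (see NOTES.md):
  At = tilde A_z, Ac = check A_z, Bt = tilde B, Bc = check B, F, D, D_v,
  (Gz,cz,Az,bz) = T^{-1} X_0 \<times> W, (Ga,ca,Aa,ba) = Z_a = T^{-1} X_a \<times> W.\<close>
record dmodel =
  At :: "real mat"
  Ac :: "real mat"
  Bt :: "real mat"
  Bc :: "real mat"
  Fm :: "real mat"
  Dm :: "real mat"
  Dvm :: "real mat"
  Gz :: "real mat"
  cz :: "real vec"
  Az :: "real mat"
  bz :: "real vec"
  Ga :: "real mat"
  ca :: "real vec"
  Aa :: "real mat"
  ba :: "real vec"

text \<open>Consistent dimensions: n state, nw disturbance, nz = n + nw, r algebraic rows,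
  nu inputs, ny outputs, nv = dimension of the noise set V.\<close>
definition wf_model :: "nat \<Rightarrow> nat \<Rightarrow> nat \<Rightarrow> dmodel \<Rightarrow> bool" where
  "wf_model ny nu nv m \<longleftrightarrow> (\<exists>n nw r gz qz ga qa.
     At m \<in> carrier_mat n (n + nw) \<and> Ac m \<in> carrier_mat r (n + nw) \<and>
     Bt m \<in> carrier_mat n nu \<and> Bc m \<in> carrier_mat r nu \<and>
     Fm m \<in> carrier_mat ny (n + nw) \<and> Dm m \<in> carrier_mat ny nu \<and> Dvm m \<in> carrier_mat ny nv \<and>
     Gz m \<in> carrier_mat (n + nw) gz \<and> cz m \<in> carrier_vec (n + nw) \<and>
     Az m \<in> carrier_mat qz gz \<and> bz m \<in> carrier_vec qz \<and>
     Ga m \<in> carrier_mat (n + nw) ga \<and> ca m \<in> carrier_vec (n + nw) \<and>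
     Aa m \<in> carrier_mat qa ga \<and> ba m \<in> carrier_vec qa)"

text \<open>Rows of Z_a corresponding to the check z component (rows n, ..., n+nw-1).\<close>
definition Gac :: "dmodel \<Rightarrow> real mat" where
  "Gac m = mat (dim_row (Ga m) - dim_row (At m)) (dim_col (Ga m))
              (\<lambda>(a,b). Ga m $$ (a + dim_row (At m), b))"

definition cac :: "dmodel \<Rightarrow> real vec" where
  "cac m = vec (dim_vec (ca m) - dim_row (At m)) (\<lambda>a. ca m $ (a + dim_row (At m)))"

section \<open>Input sequences\<close>

text \<open>ubar = (u_0, ..., u_N) stacked in a vector of dimension (N+1) nu; u_k is the k-th block.\<close>
definition useq :: "nat \<Rightarrow> real vec \<Rightarrow> nat \<Rightarrow> real vec" where
  "useq nu ubar k = vec nu (\<lambda>t. ubar $ (k * nu + t))"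

definition Ubar :: "nat \<Rightarrow> nat \<Rightarrow> real vec set \<Rightarrow> real vec set" where
  "Ubar N nu U = {ubar. ubar \<in> carrier_vec ((N + 1) * nu) \<and> (\<forall>k \<le> N. useq nu ubar k \<in> U)}"

section \<open>State reachable set recursion\<close>

text \<open>czrec m u k = (G_k, c_k, A_k, b_k) for the input sequence k \<mapsto> u k.\<close>
fun czrec :: "dmodel \<Rightarrow> (nat \<Rightarrow> real vec) \<Rightarrow> nat \<Rightarrow> real mat \<times> real vec \<times> real mat \<times> real vec" where
  "czrec m u 0 =
     (Gz m, cz m, Az m @\<^sub>r (Ac m * Gz m), bz m @\<^sub>v (- (Ac m *\<^sub>v cz m) - Bc m *\<^sub>v u 0))"
| "czrec m u (Suc k) =
     (let (G, c, A, b) = czrec m u k;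
          c' = (At m *\<^sub>v c + Bt m *\<^sub>v u k) @\<^sub>v cac m;
          G' = blkdiag (At m * G) (Gac m);
          A' = blkdiag A (Aa m) @\<^sub>r (Ac m * G');
          b' = b @\<^sub>v ba m @\<^sub>v (- (Ac m *\<^sub>v c') - Bc m *\<^sub>v u (Suc k))
      in (G', c', A', b'))"

definition GN :: "dmodel \<Rightarrow> nat \<Rightarrow> nat \<Rightarrow> real vec \<Rightarrow> real mat" where
  "GN m N nu ubar = fst (czrec m (useq nu ubar) N)"
definition cN :: "dmodel \<Rightarrow> nat \<Rightarrow> nat \<Rightarrow> real vec \<Rightarrow> real vec" where
  "cN m N nu ubar = fst (snd (czrec m (useq nu ubar) N))"
definition AN :: "dmodel \<Rightarrow> nat \<Rightarrow> nat \<Rightarrow> real vec \<Rightarrow> real mat" where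
  "AN m N nu ubar = fst (snd (snd (czrec m (useq nu ubar) N)))"
definition bN :: "dmodel \<Rightarrow> nat \<Rightarrow> nat \<Rightarrow> real vec \<Rightarrow> real vec" where
  "bN m N nu ubar = snd (snd (snd (czrec m (useq nu ubar) N)))"

text \<open>Z_N(ubar)\<close>
definition ZN :: "dmodel \<Rightarrow> nat \<Rightarrow> nat \<Rightarrow> real vec \<Rightarrow> real vec set" where
  "ZN m N nu ubar = czono (GN m N nu ubar) (cN m N nu ubar) (AN m N nu ubar) (bN m N nu ubar)"

text \<open>Output reachable set Y_N(ubar) = F Z_N(ubar) \<oplus> D u_N \<oplus> D_v V, V = {Gv,cv,Av,bv}.\<close>
definition YN :: "dmodel \<Rightarrow> nat \<Rightarrow> nat \<Rightarrow> real mat \<Rightarrow> real vec \<Rightarrow> real mat \<Rightarrow> real vec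
                  \<Rightarrow> real vec \<Rightarrow> real vec set" where
  "YN m N nu Gv cv Av bv ubar =
     {Fm m *\<^sub>v z + Dm m *\<^sub>v useq nu ubar N + Dvm m *\<^sub>v v | z v.
        z \<in> ZN m N nu ubar \<and> v \<in> czono Gv cv Av bv}"

section \<open>Constrained-zonotope data of Y_N at the zero input\<close>

definition zero_seq :: "nat \<Rightarrow> nat \<Rightarrow> real vec" where
  "zero_seq N nu = 0\<^sub>v ((N + 1) * nu)"

definition GYN :: "dmodel \<Rightarrow> nat \<Rightarrow> nat \<Rightarrow> real mat \<Rightarrow> real mat" where
  "GYN m N nu Gv = hcat (Fm m * GN m N nu (zero_seq N nu)) (Dvm m * Gv)"
definition cYN0 :: "dmodel \<Rightarrow> nat \<Rightarrow> nat \<Rightarrow> real vec \<Rightarrow> real vec" where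
  "cYN0 m N nu cv = Fm m *\<^sub>v cN m N nu (zero_seq N nu) + Dm m *\<^sub>v 0\<^sub>v nu + Dvm m *\<^sub>v cv"
definition AYN :: "dmodel \<Rightarrow> nat \<Rightarrow> nat \<Rightarrow> real mat \<Rightarrow> real mat" where
  "AYN m N nu Av = blkdiag (AN m N nu (zero_seq N nu)) Av"
definition bYN0 :: "dmodel \<Rightarrow> nat \<Rightarrow> nat \<Rightarrow> real vec \<Rightarrow> real vec" where
  "bYN0 m N nu bv = bN m N nu (zero_seq N nu) @\<^sub>v bv"

section \<open>The matrices H_h, bar H, Upsilon_N, Gamma_N, Omega_N\<close>

text \<open>M = [tilde A_z; 0] (nz \<times> nz), and [tilde B; 0] (nz \<times> nu).\<close>
definition Mmat :: "dmodel \<Rightarrow> real mat" where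
  "Mmat m = At m @\<^sub>r 0\<^sub>m (dim_col (At m) - dim_row (At m)) (dim_col (At m))"
definition Bt0 :: "dmodel \<Rightarrow> real mat" where
  "Bt0 m = Bt m @\<^sub>r 0\<^sub>m (dim_col (At m) - dim_row (At m)) (dim_col (Bt m))"

text \<open>H_h = [M^(h-1)[B;0] ... M^0[B;0] 0 ... 0] with N+1 blocks (block k acts on u_k).\<close>
definition Hmat :: "dmodel \<Rightarrow> nat \<Rightarrow> nat \<Rightarrow> nat \<Rightarrow> real mat" where
  "Hmat m N nu h = hcat_list (dim_col (At m))
     (map (\<lambda>k. if k < h then (Mmat m ^\<^sub>m (h - Suc k)) * Bt0 m
               else 0\<^sub>m (dim_col (At m)) nu) [0..<N + 1])"

definition Hbar :: "dmodel \<Rightarrow> nat \<Rightarrow> nat \<Rightarrow> real mat" where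
  "Hbar m N nu = vcat_list ((N + 1) * nu) (map (Hmat m N nu) [0..<N + 1])"

text \<open>Upsilon_N = blkdiag([0;-check A_z], ...), Gamma_N = blkdiag([0;-check B], ...), N+1 blocks;
  the zero blocks have as many rows as b_z (first block) resp. b_a (other blocks).\<close>
definition Upsilon :: "dmodel \<Rightarrow> nat \<Rightarrow> real mat" where
  "Upsilon m N = diag_block_mat
     (map (\<lambda>k. 0\<^sub>m (if k = 0 then dim_vec (bz m) else dim_vec (ba m)) (dim_col (Ac m)) @\<^sub>r (- Ac m))
          [0..<N + 1])"
definition Gamma :: "dmodel \<Rightarrow> nat \<Rightarrow> real mat" where
  "Gamma m N = diag_block_mat
     (map (\<lambda>k. 0\<^sub>m (if k = 0 then dim_vec (bz m) else dim_vec (ba m)) (dim_col (Bc m)) @\<^sub>r (- Bc m))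
          [0..<N + 1])"

definition OmegaN :: "dmodel \<Rightarrow> nat \<Rightarrow> nat \<Rightarrow> real mat" where
  "OmegaN m N nu = Gamma m N + Upsilon m N * Hbar m N nu"

section \<open>The pairwise objects N(i,j), Omega(i,j), Y(i,j)\<close>

definition Nij :: "dmodel \<Rightarrow> dmodel \<Rightarrow> nat \<Rightarrow> nat \<Rightarrow> real mat" where
  "Nij mi mj N nu = Fm mj * Hmat mj N nu N - Fm mi * Hmat mi N nu N
       + hcat (0\<^sub>m (dim_row (Dm mi)) (N * nu)) (Dm mj - Dm mi)"

definition Omegaij :: "dmodel \<Rightarrow> dmodel \<Rightarrow> nat \<Rightarrow> nat \<Rightarrow> real vec \<Rightarrow> real mat" where
  "Omegaij mi mj N nu bv = OmegaN mi N nu @\<^sub>r 0\<^sub>m (dim_vec bv) ((N + 1) * nu)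
       @\<^sub>r OmegaN mj N nu @\<^sub>r 0\<^sub>m (dim_vec bv) ((N + 1) * nu)"

definition GYij :: "dmodel \<Rightarrow> dmodel \<Rightarrow> nat \<Rightarrow> nat \<Rightarrow> real mat \<Rightarrow> real mat" where
  "GYij mi mj N nu Gv = hcat (GYN mi N nu Gv) (- GYN mj N nu Gv)"
definition cYij :: "dmodel \<Rightarrow> dmodel \<Rightarrow> nat \<Rightarrow> nat \<Rightarrow> real vec \<Rightarrow> real vec" where
  "cYij mi mj N nu cv = cYN0 mi N nu cv - cYN0 mj N nu cv"
definition AYij :: "dmodel \<Rightarrow> dmodel \<Rightarrow> nat \<Rightarrow> nat \<Rightarrow> real mat \<Rightarrow> real mat" where
  "AYij mi mj N nu Av = blkdiag (AYN mi N nu Av) (AYN mj N nu Av)"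
definition bYij :: "dmodel \<Rightarrow> dmodel \<Rightarrow> nat \<Rightarrow> nat \<Rightarrow> real vec \<Rightarrow> real vec" where
  "bYij mi mj N nu bv = bYN0 mi N nu bv @\<^sub>v bYN0 mj N nu bv"

text \<open>mathcal Y(i,j) = { [G^Y(i,j); A^Y(i,j)], [c^Y(i,j); -b^Y(i,j)] } (a zonotope).\<close>
definition Yij :: "dmodel \<Rightarrow> dmodel \<Rightarrow> nat \<Rightarrow> nat \<Rightarrow> real mat \<Rightarrow> real vec \<Rightarrow> real mat
                   \<Rightarrow> real vec \<Rightarrow> real vec set" where
  "Yij mi mj N nu Gv cv Av bv =
     zono (GYij mi mj N nu Gv @\<^sub>r AYij mi mj N nu Av) (cYij mi mj N nu cv @\<^sub>v (- bYij mi mj N nu bv))"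

end

theory Submission
  imports Defs
begin

(* ---- part A ---- *)

lemma append_vec_nil: "dim_vec w = 0 \<Longrightarrow> v @\<^sub>v w = v"
  by (rule eq_vecI) auto

lemma append_vec_assoc: "(a @\<^sub>v b) @\<^sub>v c = a @\<^sub>v (b @\<^sub>v c)"
proof (rule eq_vecI)
  fix i assume "i < dim_vec (a @\<^sub>v (b @\<^sub>v c))"
  then show "((a @\<^sub>v b) @\<^sub>v c) $ i = (a @\<^sub>v (b @\<^sub>v c)) $ i"
    by (cases "i < dim_vec a"; cases "i < dim_vec a + dim_vec b") auto
qed auto

lemma uminus_append_vec: "- (a @\<^sub>v b) = (- a) @\<^sub>v (- b)"
proof (rule eq_vecI)
  fix i assume "i < dim_vec ((- a) @\<^sub>v (- b))"
  then show "(- (a @\<^sub>v b)) $ i = ((- a) @\<^sub>v (- b)) $ i"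
    by (cases "i < dim_vec a") auto
qed auto

lemma blkdiag_eq: "blkdiag A B = four_block_mat A (0\<^sub>m (dim_row A) (dim_col B)) (0\<^sub>m (dim_row B) (dim_col A)) B"
  unfolding blkdiag_def diag_block_mat.simps(2)[of A "[B]"] diag_block_mat_singleton Let_def ..

lemma blkdiag_carrier: "A \<in> carrier_mat a1 a2 \<Longrightarrow> B \<in> carrier_mat b1 b2 \<Longrightarrow> blkdiag A B \<in> carrier_mat (a1+b1) (a2+b2)"
  unfolding blkdiag_eq by auto

lemma blkdiag_mult: "A \<in> carrier_mat a1 a2 \<Longrightarrow> B \<in> carrier_mat b1 b2 \<Longrightarrow> x \<in> carrier_vec a2 \<Longrightarrow> y \<in> carrier_vec b2
  \<Longrightarrow> blkdiag A B *\<^sub>v (x @\<^sub>v y) = (A *\<^sub>v x) @\<^sub>v (B *\<^sub>v y)"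
  unfolding blkdiag_eq
  by (subst four_block_mat_mult_vec[of A a1 a2 _ b2 _ b1]) auto

lemma hcat_carrier: "A \<in> carrier_mat nr a2 \<Longrightarrow> B \<in> carrier_mat nr b2 \<Longrightarrow> hcat A B \<in> carrier_mat nr (a2+b2)"
  unfolding hcat_def by auto

lemma hcat_mult: "A \<in> carrier_mat nr a2 \<Longrightarrow> B \<in> carrier_mat nr b2 \<Longrightarrow> x \<in> carrier_vec a2 \<Longrightarrow> y \<in> carrier_vec b2
  \<Longrightarrow> hcat A B *\<^sub>v (x @\<^sub>v y) = A *\<^sub>v x + B *\<^sub>v y"
  unfolding hcat_def
  by (subst four_block_mat_mult_vec[of A nr a2 _ b2 _ 0]) (auto intro!: append_vec_nil)

lemma zero_mat_mult_vec[simp]: "dim_vec v = c \<Longrightarrow> 0\<^sub>m r c *\<^sub>v v = 0\<^sub>v r"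
  by (rule eq_vecI) (auto simp: scalar_prod_def)

definition vconcat :: "real vec list \<Rightarrow> real vec" where
  "vconcat vs = foldr (@\<^sub>v) vs (0\<^sub>v 0)"

lemma vconcat_simps[simp]: "vconcat [] = 0\<^sub>v 0" "vconcat (v # vs) = v @\<^sub>v vconcat vs"
  unfolding vconcat_def by auto

lemma vconcat_append: "vconcat (xs @ ys) = vconcat xs @\<^sub>v vconcat ys"
  by (induction xs) (auto simp: append_vec_assoc append_vec_nil)

lemma vconcat_single: "vconcat [x] = x"
  by (simp add: append_vec_nil)

lemma dim_vconcat: "dim_vec (vconcat vs) = sum_list (map dim_vec vs)"
  by (induction vs) auto

lemma diag_block_mult:
  "length Ms = length vs \<Longrightarrow> (\<forall>i < length Ms. dim_vec (vs ! i) = dim_col (Ms ! i)) \<Longrightarrow>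
   diag_block_mat Ms *\<^sub>v vconcat vs = vconcat (map2 (*\<^sub>v) Ms vs)"
proof (induction Ms arbitrary: vs)
  case Nil
  then show ?case by (auto intro!: eq_vecI)
next
  case (Cons M Ms)
  then obtain v vs' where vs: "vs = v # vs'" by (cases vs) auto
  have pr: "\<forall>i<length Ms. dim_vec (vs' ! i) = dim_col (Ms ! i)"
  proof (intro allI impI)
    fix i assume "i < length Ms" then show "dim_vec (vs' ! i) = dim_col (Ms ! i)"
      using Cons.prems(2)[rule_format, of "Suc i"] by (auto simp: vs)
  qed
  have IH: "diag_block_mat Ms *\<^sub>v vconcat vs' = vconcat (map2 (*\<^sub>v) Ms vs')"
    using Cons.IH[of vs'] Cons.prems(1) pr by (auto simp: vs)
  have dv: "dim_vec v = dim_col M" using Cons.prems(2)[rule_format, of 0] by (auto simp: vs)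
  have dvs: "dim_vec (vconcat vs') = dim_col (diag_block_mat Ms)"
    using Cons.prems(1) pr unfolding vs dim_vconcat dim_diag_block_mat
    by (auto intro!: arg_cong[of _ _ sum_list] nth_equalityI)
  let ?D = "diag_block_mat Ms"
  have Mc: "M \<in> carrier_mat (dim_row M) (dim_col M)" by (rule carrier_matI) auto
  have Dc: "?D \<in> carrier_mat (dim_row ?D) (dim_col ?D)" by (rule carrier_matI) auto
  have vc: "v \<in> carrier_vec (dim_col M)" using dv by (rule carrier_vecI)
  have wc: "vconcat vs' \<in> carrier_vec (dim_col ?D)" using dvs by (rule carrier_vecI)
  have "diag_block_mat (M # Ms) *\<^sub>v vconcat (v # vs') =
     (M *\<^sub>v v + 0\<^sub>m (dim_row M) (dim_col ?D) *\<^sub>v vconcat vs') @\<^sub>v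
     (0\<^sub>m (dim_row ?D) (dim_col M) *\<^sub>v v + ?D *\<^sub>v vconcat vs')"
    unfolding diag_block_mat.simps Let_def vconcat_simps
    by (rule four_block_mat_mult_vec[OF Mc _ _ Dc vc wc]) auto
  also have "\<dots> = (M *\<^sub>v v) @\<^sub>v (?D *\<^sub>v vconcat vs')"
    by (simp only: zero_mat_mult_vec[OF dvs] zero_mat_mult_vec[OF dv]
      right_zero_vec[OF mult_mat_vec_carrier[OF Mc vc]] left_zero_vec[OF mult_mat_vec_carrier[OF Dc wc]])
  also have "\<dots> = vconcat (map2 (*\<^sub>v) (M # Ms) (v # vs'))"
    unfolding IH by simp
  finally show ?case unfolding vs .
qed

lemma vcat_list_carrier: "(\<forall>M \<in> set Ms. dim_col M = nc) \<Longrightarrow> vcat_list nc Ms \<in> carrier_mat (sum_list (map dim_row Ms)) nc"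
  unfolding vcat_list_def by (induction Ms) auto

lemma vcat_list_mult: "(\<forall>M \<in> set Ms. dim_col M = nc) \<Longrightarrow> v \<in> carrier_vec nc \<Longrightarrow>
   vcat_list nc Ms *\<^sub>v v = vconcat (map (\<lambda>M. M *\<^sub>v v) Ms)"
proof (induction Ms)
  case Nil
  then show ?case by (auto simp: vcat_list_def intro!: eq_vecI)
next
  case (Cons M Ms)
  have e: "vcat_list nc (M # Ms) = M @\<^sub>r vcat_list nc Ms" by (simp add: vcat_list_def)
  have c: "vcat_list nc Ms \<in> carrier_mat (sum_list (map dim_row Ms)) nc"
    using Cons by (intro vcat_list_carrier) auto
  have Mc: "M \<in> carrier_mat (dim_row M) nc" using Cons.prems(1) by (intro carrier_matI) auto
  have IH: "vcat_list nc Ms *\<^sub>v v = vconcat (map (\<lambda>M. M *\<^sub>v v) Ms)" using Cons by auto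
  show ?case unfolding e mat_mult_append[OF Mc c Cons.prems(2)] IH by simp
qed

lemma hcat_list_carrier: "(\<forall>M \<in> set Ms. dim_row M = nr) \<Longrightarrow> hcat_list nr Ms \<in> carrier_mat nr (sum_list (map dim_col Ms))"
proof (induction Ms)
  case Nil then show ?case by (auto simp: hcat_list_def)
next
  case (Cons M Ms)
  have e: "hcat_list nr (M # Ms) = hcat M (hcat_list nr Ms)" by (simp add: hcat_list_def)
  have Mc: "M \<in> carrier_mat nr (dim_col M)" by (rule carrier_matI) (use Cons.prems in auto)
  have IH: "hcat_list nr Ms \<in> carrier_mat nr (sum_list (map dim_col Ms))" using Cons by auto
  show ?case unfolding e using hcat_carrier[OF Mc IH] by simp
qed

lemma hcat_list_mult: "length Ms = length vs \<Longrightarrow> (\<forall>M \<in> set Ms. dim_row M = nr) \<Longrightarrow>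
   (\<forall>i < length Ms. dim_vec (vs ! i) = dim_col (Ms ! i)) \<Longrightarrow>
   hcat_list nr Ms *\<^sub>v vconcat vs = foldr (\<lambda>(M,v) acc. M *\<^sub>v v + acc) (zip Ms vs) (0\<^sub>v nr)"
proof (induction Ms arbitrary: vs)
  case Nil
  then show ?case by (auto simp: hcat_list_def intro!: eq_vecI)
next
  case (Cons M Ms)
  then obtain v vs' where vs: "vs = v # vs'" by (cases vs) auto
  have pr: "\<forall>i<length Ms. dim_vec (vs' ! i) = dim_col (Ms ! i)"
  proof (intro allI impI)
    fix i assume "i < length Ms" then show "dim_vec (vs' ! i) = dim_col (Ms ! i)"
      using Cons.prems(3)[rule_format, of "Suc i"] by (auto simp: vs)
  qed
  have IH: "hcat_list nr Ms *\<^sub>v vconcat vs' = foldr (\<lambda>(M,v) acc. M *\<^sub>v v + acc) (zip Ms vs') (0\<^sub>v nr)"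
    using Cons.IH[of vs'] Cons.prems(1,2) pr by (auto simp: vs)
  have dv: "dim_vec v = dim_col M" using Cons.prems(3)[rule_format, of 0] by (auto simp: vs)
  have dvs: "dim_vec (vconcat vs') = sum_list (map dim_col Ms)"
    using Cons.prems(1) pr unfolding vs dim_vconcat
    by (auto intro!: arg_cong[of _ _ sum_list] nth_equalityI)
  have e: "hcat_list nr (M # Ms) = hcat M (hcat_list nr Ms)" by (simp add: hcat_list_def)
  have c: "hcat_list nr Ms \<in> carrier_mat nr (sum_list (map dim_col Ms))"
    using Cons by (intro hcat_list_carrier) auto
  have M: "M \<in> carrier_mat nr (dim_col M)" by (rule carrier_matI) (use Cons.prems(2) in auto)
  have "hcat_list nr (M # Ms) *\<^sub>v vconcat (v # vs') = M *\<^sub>v v + hcat_list nr Ms *\<^sub>v vconcat vs'"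
    unfolding e vconcat_simps
    by (rule hcat_mult[OF M c carrier_vecI[OF dv] carrier_vecI[OF dvs]])
  also have "\<dots> = foldr (\<lambda>(M,v) acc. M *\<^sub>v v + acc) (zip (M # Ms) (v # vs')) (0\<^sub>v nr)"
    unfolding IH by simp
  finally show ?case unfolding vs .
qed

lemma mat_mult_zero_vec[simp]: "0\<^sub>v n = 0\<^sub>v (dim_col A) \<Longrightarrow> A *\<^sub>v 0\<^sub>v n = 0\<^sub>v (dim_row A)"
  by (rule eq_vecI) (auto simp: scalar_prod_def)

lemma foldr_zip_map: "foldr (\<lambda>(M,v) acc. M *\<^sub>v v + acc) (zip (map f xs) (map g xs)) z =
  foldr (\<lambda>k acc. f k *\<^sub>v g k + acc) xs z"
  by (induction xs) auto

lemma vconcat_add: "(\<forall>j \<in> set xs. dim_vec (f j) = dim_vec (g j)) \<Longrightarrow>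
  vconcat (map f xs) + vconcat (map g xs) = vconcat (map (\<lambda>j. f j + g j) xs)"
proof (induction xs)
  case Nil then show ?case by (auto intro!: eq_vecI)
next
  case (Cons x xs)
  have IH: "vconcat (map f xs) + vconcat (map g xs) = vconcat (map (\<lambda>j. f j + g j) xs)" using Cons by auto
  have d: "dim_vec (vconcat (map f xs)) = dim_vec (vconcat (map g xs))"
    using Cons.prems unfolding dim_vconcat by (induction xs) auto
  have fx: "f x \<in> carrier_vec (dim_vec (f x))" by (rule carrier_vecI) simp
  have gx: "g x \<in> carrier_vec (dim_vec (f x))" by (rule carrier_vecI) (use Cons.prems in simp)
  have F: "vconcat (map f xs) \<in> carrier_vec (dim_vec (vconcat (map f xs)))" by (rule carrier_vecI) simp
  have G: "vconcat (map g xs) \<in> carrier_vec (dim_vec (vconcat (map f xs)))" by (rule carrier_vecI) (use d in simp)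
  have "vconcat (map f (x # xs)) + vconcat (map g (x # xs)) = (f x @\<^sub>v vconcat (map f xs)) + (g x @\<^sub>v vconcat (map g xs))"
    by simp
  also have "\<dots> = (f x + g x) @\<^sub>v (vconcat (map f xs) + vconcat (map g xs))"
    by (rule append_vec_add[OF fx gx F G])
  also have "\<dots> = vconcat (map (\<lambda>j. f j + g j) (x # xs))" by (simp only: IH) simp
  finally show ?case .
qed

lemma useq_carrier[simp]: "useq nu ubar k \<in> carrier_vec nu"
  unfolding useq_def by simp

lemma ubar_split_gen: "k * nu \<le> dim_vec v \<Longrightarrow> vconcat (map (useq nu v) [0..<k]) = vec (k * nu) (\<lambda>i. v $ i)"
proof (induction k)
  case 0 then show ?case by (auto intro!: eq_vecI)
next
  case (Suc k)
  have IH: "vconcat (map (useq nu v) [0..<k]) = vec (k * nu) (\<lambda>i. v $ i)" using Suc by auto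
  show ?case unfolding upt_Suc_append[OF le0] map_append vconcat_append IH
    by (rule eq_vecI) (auto simp: vconcat_single useq_def algebra_simps)
qed

lemma ubar_split: "ubar \<in> carrier_vec ((N+1) * nu) \<Longrightarrow> ubar = vconcat (map (useq nu ubar) [0..<N+1])"
  by (subst ubar_split_gen) (auto intro!: eq_vecI)

lemma ubar_split_last: "ubar \<in> carrier_vec ((N+1) * nu) \<Longrightarrow> ubar = vec_first ubar (N * nu) @\<^sub>v useq nu ubar N"
proof -
  assume u: "ubar \<in> carrier_vec ((N+1) * nu)"
  have "useq nu ubar N = vec_last ubar nu" using u unfolding useq_def vec_last_def
    by (intro eq_vecI) (auto simp: algebra_simps)
  moreover have "ubar \<in> carrier_vec (N * nu + nu)" using u by (simp add: algebra_simps)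
  ultimately show ?thesis using vec_first_last_append by metis
qed


(* ---- part B ---- *)

locale mctx =
  fixes m :: dmodel and ny nu nv n nw r gz qz ga qa :: nat
  assumes At: "At m \<in> carrier_mat n (n + nw)" and Ac: "Ac m \<in> carrier_mat r (n + nw)"
    and Bt: "Bt m \<in> carrier_mat n nu" and Bc: "Bc m \<in> carrier_mat r nu"
    and Fm: "Fm m \<in> carrier_mat ny (n + nw)" and Dm: "Dm m \<in> carrier_mat ny nu"
    and Dvm: "Dvm m \<in> carrier_mat ny nv"
    and Gz: "Gz m \<in> carrier_mat (n + nw) gz" and cz: "cz m \<in> carrier_vec (n + nw)"
    and Az: "Az m \<in> carrier_mat qz gz" and bz: "bz m \<in> carrier_vec qz"
    and Ga: "Ga m \<in> carrier_mat (n + nw) ga" and ca: "ca m \<in> carrier_vec (n + nw)"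
    and Aa: "Aa m \<in> carrier_mat qa ga" and ba: "ba m \<in> carrier_vec qa"
begin

lemma Gac: "Gac m \<in> carrier_mat nw ga"
  using At Ga unfolding Gac_def by auto
lemma cac: "cac m \<in> carrier_vec nw"
  using At ca unfolding cac_def by auto
lemma Mmat: "Mmat m \<in> carrier_mat (n + nw) (n + nw)"
  using At unfolding Mmat_def by auto
lemma Bt0: "Bt0 m \<in> carrier_mat (n + nw) nu"
  using At Bt unfolding Bt0_def by auto

definition "Gk u k = fst (czrec m u k)"
definition "ck u k = fst (snd (czrec m u k))"
definition "Ak u k = fst (snd (snd (czrec m u k)))"
definition "bk u k = snd (snd (snd (czrec m u k)))"

lemma k0: "Gk u 0 = Gz m" "ck u 0 = cz m" "Ak u 0 = Az m @\<^sub>r (Ac m * Gz m)"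
  "bk u 0 = bz m @\<^sub>v (- (Ac m *\<^sub>v cz m) - Bc m *\<^sub>v u 0)"
  unfolding Gk_def ck_def Ak_def bk_def by auto

lemma kSuc: "Gk u (Suc k) = blkdiag (At m * Gk u k) (Gac m)"
  "ck u (Suc k) = (At m *\<^sub>v ck u k + Bt m *\<^sub>v u k) @\<^sub>v cac m"
  "Ak u (Suc k) = blkdiag (Ak u k) (Aa m) @\<^sub>r (Ac m * blkdiag (At m * Gk u k) (Gac m))"
  "bk u (Suc k) = bk u k @\<^sub>v ba m @\<^sub>v (- (Ac m *\<^sub>v ck u (Suc k)) - Bc m *\<^sub>v u (Suc k))"
proof -
  obtain G c A b where e: "czrec m u k = (G, c, A, b)" by (cases "czrec m u k") auto
  show "Gk u (Suc k) = blkdiag (At m * Gk u k) (Gac m)"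
    "ck u (Suc k) = (At m *\<^sub>v ck u k + Bt m *\<^sub>v u k) @\<^sub>v cac m"
    "Ak u (Suc k) = blkdiag (Ak u k) (Aa m) @\<^sub>r (Ac m * blkdiag (At m * Gk u k) (Gac m))"
    unfolding Gk_def ck_def Ak_def by (simp_all add: e Let_def)
  then show "bk u (Suc k) = bk u k @\<^sub>v ba m @\<^sub>v (- (Ac m *\<^sub>v ck u (Suc k)) - Bc m *\<^sub>v u (Suc k))"
    unfolding Gk_def ck_def Ak_def bk_def by (simp add: e Let_def)
qed

abbreviation "gd k \<equiv> gz + k * ga"
abbreviation "qd k \<equiv> qz + r + k * (qa + r)"

lemma dims: assumes "\<forall>j. u j \<in> carrier_vec nu"
  shows "Gk u k \<in> carrier_mat (n + nw) (gd k) \<and> ck u k \<in> carrier_vec (n + nw) \<and>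
         Ak u k \<in> carrier_mat (qd k) (gd k) \<and> bk u k \<in> carrier_vec (qd k)"
proof (induction k)
  case 0
  have u0: "u 0 \<in> carrier_vec nu" using assms by auto
  show ?case unfolding k0 using At Ac Bc Gz cz Az bz u0 by auto
next
  case (Suc k)
  have uk: "u k \<in> carrier_vec nu" "u (Suc k) \<in> carrier_vec nu" using assms by auto
  have G: "Gk u k \<in> carrier_mat (n + nw) (gd k)" and c: "ck u k \<in> carrier_vec (n + nw)"
    and A: "Ak u k \<in> carrier_mat (qd k) (gd k)" and b: "bk u k \<in> carrier_vec (qd k)" using Suc by auto
  have G': "blkdiag (At m * Gk u k) (Gac m) \<in> carrier_mat (n + nw) (gd k + ga)"
    using blkdiag_carrier[OF mult_carrier_mat[OF At G] Gac] by simp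
  have c': "ck u (Suc k) \<in> carrier_vec (n + nw)" unfolding kSuc using At Bt c uk cac by auto
  have A': "Ak u (Suc k) \<in> carrier_mat (qd k + qa + r) (gd k + ga)"
    unfolding kSuc using carrier_append_rows[OF blkdiag_carrier[OF A Aa] mult_carrier_mat[OF Ac G']] by simp
  have b': "bk u (Suc k) \<in> carrier_vec (qd k + qa + r)"
  proof (rule carrier_vecI)
    have d1: "dim_vec (bk u k) = qd k" using b by (rule carrier_vecD)
    have d2: "dim_vec (ba m) = qa" using ba by (rule carrier_vecD)
    have d3: "dim_row (Bc m) = r" using Bc by (rule carrier_matD)
    show "dim_vec (bk u (Suc k)) = qd k + qa + r" unfolding kSuc(4) index_append_vec(2) d1 d2
      by (simp add: d3)
  qed
  show ?case using G' c' A' b' unfolding kSuc(1) by (simp add: algebra_simps)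
qed

lemma dims': assumes "\<forall>j. u j \<in> carrier_vec nu"
  shows "Gk u k \<in> carrier_mat (n + nw) (gd k)" "ck u k \<in> carrier_vec (n + nw)"
         "Ak u k \<in> carrier_mat (qd k) (gd k)" "bk u k \<in> carrier_vec (qd k)"
  using dims[OF assms] by auto

lemma indep: "Gk u k = Gk u' k \<and> Ak u k = Ak u' k"
  by (induction k) (simp_all add: k0 kSuc)

end

(* ---- part C ---- *)

lemma pow_Suc_left: "M \<in> carrier_mat k k \<Longrightarrow> M ^\<^sub>m Suc j = M * M ^\<^sub>m j"
proof (induction j)
  case 0 then show ?case by simp
next
  case (Suc j)
  have "M ^\<^sub>m Suc (Suc j) = (M * M ^\<^sub>m j) * M" using Suc by simp
  also have "\<dots> = M * (M ^\<^sub>m j * M)" using Suc.prems by (rule assoc_mult_mat) (use Suc.prems in auto)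
  finally show ?case by simp
qed

context mctx begin

primrec dlt :: "(nat \<Rightarrow> real vec) \<Rightarrow> nat \<Rightarrow> real vec" where
  "dlt u 0 = 0\<^sub>v (n + nw)"
| "dlt u (Suc k) = Mmat m *\<^sub>v dlt u k + Bt0 m *\<^sub>v u k"

lemma dlt_carrier: "\<forall>j. u j \<in> carrier_vec nu \<Longrightarrow> dlt u k \<in> carrier_vec (n + nw)"
  by (induction k) (use Mmat Bt0 in auto)

lemma M_app: "x \<in> carrier_vec (n + nw) \<Longrightarrow> Mmat m *\<^sub>v x = (At m *\<^sub>v x) @\<^sub>v 0\<^sub>v nw"
proof -
  assume x: "x \<in> carrier_vec (n + nw)"
  have e: "Mmat m = At m @\<^sub>r 0\<^sub>m nw (n + nw)" unfolding Mmat_def using At by simp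
  have z: "0\<^sub>m nw (n + nw) \<in> carrier_mat nw (n + nw)" by simp
  show ?thesis unfolding e mat_mult_append[OF At z x] using x by simp
qed

lemma B_app: "y \<in> carrier_vec nu \<Longrightarrow> Bt0 m *\<^sub>v y = (Bt m *\<^sub>v y) @\<^sub>v 0\<^sub>v nw"
proof -
  assume y: "y \<in> carrier_vec nu"
  have e: "Bt0 m = Bt m @\<^sub>r 0\<^sub>m nw nu" unfolding Bt0_def using At Bt by simp
  have z: "0\<^sub>m nw nu \<in> carrier_mat nw nu" by simp
  show ?thesis unfolding e mat_mult_append[OF Bt z y] using y by simp
qed

lemma c_diff: assumes u: "\<forall>j. u j \<in> carrier_vec nu" and u0': "\<forall>j. u0 j \<in> carrier_vec nu" and u0: "\<forall>j\<le>K. u0 j = 0\<^sub>v nu"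
  shows "k \<le> K \<Longrightarrow> ck u k = ck u0 k + dlt u k"
proof (induction k)
  case 0 then show ?case using cz by (simp add: k0)
next
  case (Suc k)
  have IH: "ck u k = ck u0 k + dlt u k" using Suc by auto
  have c0: "ck u0 k \<in> carrier_vec (n + nw)" using dims'(2)[OF u0'] .
  have d: "dlt u k \<in> carrier_vec (n + nw)" using dlt_carrier[OF u] .
  have uk: "u k \<in> carrier_vec nu" using u by auto
  have z: "u0 k = 0\<^sub>v nu" using u0 Suc.prems by auto
  have "ck u (Suc k) = (At m *\<^sub>v ck u0 k + At m *\<^sub>v dlt u k + Bt m *\<^sub>v u k) @\<^sub>v cac m"
    unfolding kSuc IH using mult_add_distrib_mat_vec[OF At c0 d] by simp
  moreover have "ck u0 (Suc k) = (At m *\<^sub>v ck u0 k) @\<^sub>v cac m"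
    unfolding kSuc z using Bt c0 At by simp
  moreover have "dlt u (Suc k) = (At m *\<^sub>v dlt u k + Bt m *\<^sub>v u k) @\<^sub>v 0\<^sub>v nw"
    unfolding dlt.simps M_app[OF d] B_app[OF uk]
    by (subst append_vec_add[of _ n _ _ nw]) (use At Bt d uk in auto)
  ultimately show ?case
    by (intro eq_vecI) (use At Bt d uk c0 cac in \<open>auto simp: nth_append\<close>)
qed

end

(* ---- part D ---- *)

context mctx begin

definition blk :: "nat \<Rightarrow> nat \<Rightarrow> real mat" where
  "blk h k = (if k < h then Mmat m ^\<^sub>m (h - Suc k) * Bt0 m else 0\<^sub>m (n + nw) nu)"

lemma blk_carrier: "blk h k \<in> carrier_mat (n + nw) nu"
  unfolding blk_def using Mmat Bt0 by auto

definition S :: "(nat \<Rightarrow> real vec) \<Rightarrow> nat \<Rightarrow> nat list \<Rightarrow> real vec" where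
  "S u h xs = foldr (\<lambda>k acc. blk h k *\<^sub>v u k + acc) xs (0\<^sub>v (n + nw))"

lemma S_carrier: "\<forall>j. u j \<in> carrier_vec nu \<Longrightarrow> S u h xs \<in> carrier_vec (n + nw)"
  unfolding S_def by (induction xs) (auto intro!: add_carrier_vec mult_mat_vec_carrier[OF blk_carrier])

lemma blk_Suc: assumes y: "y \<in> carrier_vec nu"
  shows "blk (Suc h) x *\<^sub>v y = Mmat m *\<^sub>v (blk h x *\<^sub>v y) + (if x = h then Bt0 m *\<^sub>v y else 0\<^sub>v (n + nw))"
proof -
  consider "x < h" | "x = h" | "x > h" by arith
  then show ?thesis
  proof cases
    case 1
    have e: "Suc h - Suc x = Suc (h - Suc x)" using 1 by arith
    have P: "Mmat m ^\<^sub>m (h - Suc x) \<in> carrier_mat (n + nw) (n + nw)" using Mmat by simp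
    have "blk (Suc h) x = (Mmat m * Mmat m ^\<^sub>m (h - Suc x)) * Bt0 m"
      unfolding blk_def using 1 e pow_Suc_left[OF Mmat] by simp
    then have "blk (Suc h) x *\<^sub>v y = Mmat m *\<^sub>v ((Mmat m ^\<^sub>m (h - Suc x) * Bt0 m) *\<^sub>v y)"
      using assoc_mult_mat_vec[OF Mmat mult_carrier_mat[OF P Bt0] y] assoc_mult_mat[OF Mmat P Bt0] by simp
    note prev = this
    have c1: "(Mmat m ^\<^sub>m (h - Suc x) * Bt0 m) *\<^sub>v y \<in> carrier_vec (n + nw)"
      using mult_mat_vec_carrier[OF mult_carrier_mat[OF P Bt0] y] .
    have bh: "blk h x = Mmat m ^\<^sub>m (h - Suc x) * Bt0 m" using 1 by (simp add: blk_def)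
    have nx: "(x = h) = False" using 1 by simp
    show ?thesis unfolding bh nx if_False right_zero_vec[OF mult_mat_vec_carrier[OF Mmat c1]] by (rule prev)
  next
    case 2
    then show ?thesis unfolding blk_def using Mmat Bt0 y by simp
  next
    case 3
    then show ?thesis unfolding blk_def using Mmat Bt0 y by simp
  qed
qed

lemma S_Suc: assumes u: "\<forall>j. u j \<in> carrier_vec nu"
  shows "distinct xs \<Longrightarrow> S u (Suc h) xs = Mmat m *\<^sub>v S u h xs + (if h \<in> set xs then Bt0 m *\<^sub>v u h else 0\<^sub>v (n + nw))"
proof (induction xs)
  case Nil then show ?case unfolding S_def using Mmat by simp
next
  case (Cons x xs)
  have IH: "S u (Suc h) xs = Mmat m *\<^sub>v S u h xs + (if h \<in> set xs then Bt0 m *\<^sub>v u h else 0\<^sub>v (n + nw))"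
    using Cons by auto
  have ux: "u x \<in> carrier_vec nu" "u h \<in> carrier_vec nu" using u by auto
  have Sc: "S u h xs \<in> carrier_vec (n + nw)" using S_carrier[OF u] .
  have bc: "blk h x *\<^sub>v u x \<in> carrier_vec (n + nw)" using mult_mat_vec_carrier[OF blk_carrier ux(1)] .
  have e1: "S u (Suc h) (x # xs) = blk (Suc h) x *\<^sub>v u x + S u (Suc h) xs" unfolding S_def by simp
  have e2: "S u h (x # xs) = blk h x *\<^sub>v u x + S u h xs" unfolding S_def by simp
  have e3: "Mmat m *\<^sub>v (blk h x *\<^sub>v u x + S u h xs) = Mmat m *\<^sub>v (blk h x *\<^sub>v u x) + Mmat m *\<^sub>v S u h xs"
    by (rule mult_add_distrib_mat_vec[OF Mmat bc Sc])
  have nd: "x = h \<Longrightarrow> h \<notin> set xs" using Cons.prems by auto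
  show ?case unfolding e1 e2 e3 IH blk_Suc[OF ux(1)]
    by (intro eq_vecI) (use Mmat Bt0 ux bc Sc nd in auto)
qed

lemma S_zero: "\<forall>j. u j \<in> carrier_vec nu \<Longrightarrow> S u 0 xs = 0\<^sub>v (n + nw)"
  unfolding S_def by (induction xs) (auto simp: blk_def)

lemma S_dlt: assumes u: "\<forall>j. u j \<in> carrier_vec nu"
  shows "h \<le> N \<Longrightarrow> S u h [0..<N+1] = dlt u h"
proof (induction h)
  case 0 then show ?case using S_zero[OF u] by simp
next
  case (Suc h)
  have uh: "u h \<in> carrier_vec nu" using u by auto
  show ?case using S_Suc[OF u, of "[0..<N+1]" h] Suc by simp
qed

lemma Hmat_mult: assumes ub: "ubar \<in> carrier_vec ((N+1) * nu)" and h: "h \<le> N"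
  shows "Hmat m N nu h *\<^sub>v ubar = dlt (useq nu ubar) h"
proof -
  have e: "Hmat m N nu h = hcat_list (n + nw) (map (blk h) [0..<N+1])"
  proof -
    have dc: "dim_col (At m) = n + nw" using At by simp
    show ?thesis unfolding Hmat_def blk_def dc ..
  qed
  have "Hmat m N nu h *\<^sub>v ubar = hcat_list (n + nw) (map (blk h) [0..<N+1]) *\<^sub>v vconcat (map (useq nu ubar) [0..<N+1])"
    unfolding e using ubar_split[OF ub] by simp
  also have "\<dots> = foldr (\<lambda>(M,v) acc. M *\<^sub>v v + acc) (zip (map (blk h) [0..<N+1]) (map (useq nu ubar) [0..<N+1])) (0\<^sub>v (n + nw))"
    by (rule hcat_list_mult) (simp_all add: carrier_matD[OF blk_carrier] del: upt_Suc)
  also have "\<dots> = S (useq nu ubar) h [0..<N+1]" unfolding foldr_zip_map S_def ..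
  also have "\<dots> = dlt (useq nu ubar) h" by (rule S_dlt[OF _ h]) simp
  finally show ?thesis .
qed

end

(* ---- part E ---- *)

lemma map2_map_map: "map2 f (map g xs) (map h xs) = map (\<lambda>x. f (g x) (h x)) xs"
  by (induction xs) auto

lemma useq_zero: "k \<le> N \<Longrightarrow> useq nu (zero_seq N nu) k = 0\<^sub>v nu"
proof (rule eq_vecI)
  fix i assume k: "k \<le> N" and i: "i < dim_vec (0\<^sub>v nu)"
  have "k * nu + i < (N + 1) * nu"
  proof -
    have "k * nu + i < k * nu + nu" using i by simp
    also have "\<dots> \<le> (N + 1) * nu" using k by (simp add: mult_le_mono1 add.commute[of N 1] algebra_simps)
    finally show ?thesis .
  qed
  then show "useq nu (zero_seq N nu) k $ i = 0\<^sub>v nu $ i" using i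
    unfolding useq_def zero_seq_def by simp
qed (simp add: useq_def)

context mctx begin

definition qq :: "nat \<Rightarrow> nat" where "qq j = (if j = 0 then qz else qa)"

definition bblk :: "(nat \<Rightarrow> real vec) \<Rightarrow> nat \<Rightarrow> real vec" where
  "bblk u j = (if j = 0 then bz m else ba m) @\<^sub>v (- (Ac m *\<^sub>v ck u j) - Bc m *\<^sub>v u j)"

lemma b_struct: "bk u k = vconcat (map (bblk u) [0..<Suc k])"
proof (induction k)
  case 0 then show ?case by (simp add: k0 bblk_def append_vec_nil)
next
  case (Suc k)
  have "bk u (Suc k) = bk u k @\<^sub>v bblk u (Suc k)" unfolding kSuc(4) bblk_def by simp
  also have "\<dots> = vconcat (map (bblk u) [0..<Suc k] @ [bblk u (Suc k)])"
    unfolding Suc vconcat_append vconcat_single ..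
  finally show ?case by simp
qed

definition ob :: "(nat \<Rightarrow> real vec) \<Rightarrow> nat \<Rightarrow> real vec" where
  "ob u j = 0\<^sub>v (qq j) @\<^sub>v (- (Ac m *\<^sub>v dlt u j) - Bc m *\<^sub>v u j)"

definition gb :: "nat \<Rightarrow> real mat" where
  "gb k = 0\<^sub>m (if k = 0 then dim_vec (bz m) else dim_vec (ba m)) (dim_col (Bc m)) @\<^sub>r (- Bc m)"
definition ubk :: "nat \<Rightarrow> real mat" where
  "ubk k = 0\<^sub>m (if k = 0 then dim_vec (bz m) else dim_vec (ba m)) (dim_col (Ac m)) @\<^sub>r (- Ac m)"

lemma gb_carrier: "gb k \<in> carrier_mat (qq k + r) nu"
  unfolding gb_def qq_def using bz ba Bc by auto
lemma ubk_carrier: "ubk k \<in> carrier_mat (qq k + r) (n + nw)"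
  unfolding ubk_def qq_def using bz ba Ac by auto

lemma dim_gb[simp]: "dim_row (gb k) = qq k + r" "dim_col (gb k) = nu"
  using gb_carrier by auto
lemma dim_ubk[simp]: "dim_row (ubk k) = qq k + r" "dim_col (ubk k) = n + nw"
  using ubk_carrier by auto
lemma dim_blk[simp]: "dim_row (blk h k) = n + nw" "dim_col (blk h k) = nu"
  using blk_carrier by auto

lemma Gamma_eq: "Gamma m N = diag_block_mat (map gb [0..<N+1])"
  unfolding Gamma_def gb_def ..
lemma Upsilon_eq: "Upsilon m N = diag_block_mat (map ubk [0..<N+1])"
  unfolding Upsilon_def ubk_def ..

lemma gb_mult: "y \<in> carrier_vec nu \<Longrightarrow> gb k *\<^sub>v y = 0\<^sub>v (qq k) @\<^sub>v (- (Bc m *\<^sub>v y))"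
proof -
  assume y: "y \<in> carrier_vec nu"
  have e: "gb k = 0\<^sub>m (qq k) nu @\<^sub>r (- Bc m)" unfolding gb_def qq_def using bz ba Bc by auto
  have z: "0\<^sub>m (qq k) nu \<in> carrier_mat (qq k) nu" by simp
  have mB: "- Bc m \<in> carrier_mat r nu" using Bc by simp
  show ?thesis unfolding e mat_mult_append[OF z mB y] using y Bc by simp
qed

lemma ubk_mult: "y \<in> carrier_vec (n + nw) \<Longrightarrow> ubk k *\<^sub>v y = 0\<^sub>v (qq k) @\<^sub>v (- (Ac m *\<^sub>v y))"
proof -
  assume y: "y \<in> carrier_vec (n + nw)"
  have e: "ubk k = 0\<^sub>m (qq k) (n + nw) @\<^sub>r (- Ac m)" unfolding ubk_def qq_def using bz ba Ac by auto
  have z: "0\<^sub>m (qq k) (n + nw) \<in> carrier_mat (qq k) (n + nw)" by simp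
  have mA: "- Ac m \<in> carrier_mat r (n + nw)" using Ac by simp
  show ?thesis unfolding e mat_mult_append[OF z mA y] using y Ac by simp
qed

lemma Hmat_carrier: "Hmat m N nu h \<in> carrier_mat (n + nw) ((N+1) * nu)"
proof -
  have dc: "dim_col (At m) = n + nw" using At by simp
  have e: "Hmat m N nu h = hcat_list (n + nw) (map (blk h) [0..<N+1])"
    unfolding Hmat_def blk_def dc ..
  have "hcat_list (n + nw) (map (blk h) [0..<N+1]) \<in> carrier_mat (n + nw) (sum_list (map dim_col (map (blk h) [0..<N+1])))"
    by (rule hcat_list_carrier) (simp add: carrier_matD[OF blk_carrier])
  moreover have "sum_list (map dim_col (map (blk h) [0..<N+1])) = (N+1) * nu"
    by (simp add: o_def sum_list_triv del: upt_Suc)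
  ultimately show ?thesis unfolding e by (simp add: add.commute)
qed

lemma dim_Hmat[simp]: "dim_row (Hmat m N nu h) = n + nw" "dim_col (Hmat m N nu h) = (N+1) * nu"
  using Hmat_carrier by auto

lemma Omega_mult: assumes ub: "ubar \<in> carrier_vec ((N+1) * nu)"
  shows "OmegaN m N nu *\<^sub>v ubar = vconcat (map (ob (useq nu ubar)) [0..<N+1])"
proof -
  let ?u = "useq nu ubar"
  let ?xs = "[0..<N+1]"
  let ?R = "sum_list (map (\<lambda>k. qq k + r) ?xs)"
  have Gc: "Gamma m N \<in> carrier_mat ?R ((N+1) * nu)"
    unfolding Gamma_eq
    by (rule carrier_matI) (simp_all add: dim_diag_block_mat sum_list_triv o_def del: upt_Suc)
  have Uc: "Upsilon m N \<in> carrier_mat ?R ((N+1) * (n + nw))"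
    unfolding Upsilon_eq
    by (rule carrier_matI) (simp_all add: dim_diag_block_mat sum_list_triv o_def del: upt_Suc)
  have Hc: "Hbar m N nu \<in> carrier_mat ((N+1) * (n + nw)) ((N+1) * nu)"
  proof -
    have "vcat_list ((N + 1) * nu) (map (Hmat m N nu) ?xs) \<in> carrier_mat (sum_list (map dim_row (map (Hmat m N nu) ?xs))) ((N + 1) * nu)"
      by (rule vcat_list_carrier) simp
    moreover have "sum_list (map dim_row (map (Hmat m N nu) ?xs)) = (N+1) * (n + nw)"
      by (simp add: o_def sum_list_triv del: upt_Suc)
    ultimately show ?thesis unfolding Hbar_def by (simp add: add.commute)
  qed
  have UHc: "Upsilon m N * Hbar m N nu \<in> carrier_mat ?R ((N+1) * nu)" using Uc Hc by simp
  have "OmegaN m N nu *\<^sub>v ubar = Gamma m N *\<^sub>v ubar + (Upsilon m N * Hbar m N nu) *\<^sub>v ubar"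
    unfolding OmegaN_def by (rule add_mult_distrib_mat_vec[OF Gc UHc ub])
  also have "(Upsilon m N * Hbar m N nu) *\<^sub>v ubar = Upsilon m N *\<^sub>v (Hbar m N nu *\<^sub>v ubar)"
    by (rule assoc_mult_mat_vec[OF Uc Hc ub])
  also have "Hbar m N nu *\<^sub>v ubar = vconcat (map (\<lambda>M. M *\<^sub>v ubar) (map (Hmat m N nu) ?xs))"
    unfolding Hbar_def by (rule vcat_list_mult) (simp_all add: ub[simplified])
  also have "map (\<lambda>M. M *\<^sub>v ubar) (map (Hmat m N nu) ?xs) = map (dlt ?u) ?xs"
    using Hmat_mult[OF ub] by (simp del: upt_Suc)
  also have "Upsilon m N *\<^sub>v vconcat (map (dlt ?u) ?xs) = vconcat (map (\<lambda>j. ubk j *\<^sub>v dlt ?u j) ?xs)"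
    unfolding Upsilon_eq
    by (subst diag_block_mult) (simp_all add: map2_map_map carrier_matD[OF ubk_carrier] dlt_carrier[THEN carrier_vecD] del: upt_Suc)
  also have "Gamma m N *\<^sub>v ubar = vconcat (map (\<lambda>j. gb j *\<^sub>v ?u j) ?xs)"
    unfolding Gamma_eq ubar_split[OF ub, symmetric]
    apply (subst ubar_split[OF ub])
    by (subst diag_block_mult) (simp_all add: map2_map_map carrier_matD[OF gb_carrier] del: upt_Suc)
  also have "vconcat (map (\<lambda>j. gb j *\<^sub>v ?u j) ?xs) + vconcat (map (\<lambda>j. ubk j *\<^sub>v dlt ?u j) ?xs)
      = vconcat (map (\<lambda>j. gb j *\<^sub>v ?u j + ubk j *\<^sub>v dlt ?u j) ?xs)"
    by (rule vconcat_add) (simp add: carrier_matD[OF gb_carrier] carrier_matD[OF ubk_carrier])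
  also have "map (\<lambda>j. gb j *\<^sub>v ?u j + ubk j *\<^sub>v dlt ?u j) ?xs = map (ob ?u) ?xs"
  proof (rule map_cong[OF refl])
    fix j
    have uj: "?u j \<in> carrier_vec nu" by simp
    have dj: "dlt ?u j \<in> carrier_vec (n + nw)" by (rule dlt_carrier) simp
    show "gb j *\<^sub>v ?u j + ubk j *\<^sub>v dlt ?u j = ob ?u j"
      unfolding gb_mult[OF uj] ubk_mult[OF dj] ob_def
      by (rule eq_vecI) (use uj dj Ac Bc in auto)
  qed
  finally show ?thesis .
qed

end

(* ---- part F ---- *)

context mctx begin

lemma GN_eq: "GN m N nu ubar = Gk (useq nu ubar) N" unfolding GN_def Gk_def ..
lemma cN_eq: "cN m N nu ubar = ck (useq nu ubar) N" unfolding cN_def ck_def ..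
lemma AN_eq: "AN m N nu ubar = Ak (useq nu ubar) N" unfolding AN_def Ak_def ..
lemma bN_eq: "bN m N nu ubar = bk (useq nu ubar) N" unfolding bN_def bk_def ..

lemma N_dims: "GN m N nu ubar \<in> carrier_mat (n + nw) (gd N)" "cN m N nu ubar \<in> carrier_vec (n + nw)"
  "AN m N nu ubar \<in> carrier_mat (qd N) (gd N)" "bN m N nu ubar \<in> carrier_vec (qd N)"
  unfolding GN_eq cN_eq AN_eq bN_eq by (rule dims'; simp)+

lemma GN_indep: "GN m N nu ubar = GN m N nu ubar'" "AN m N nu ubar = AN m N nu ubar'"
  unfolding GN_eq AN_eq using indep by auto

lemma cN_aff: assumes ub: "ubar \<in> carrier_vec ((N+1) * nu)"
  shows "cN m N nu ubar = cN m N nu (zero_seq N nu) + Hmat m N nu N *\<^sub>v ubar"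
  unfolding cN_eq Hmat_mult[OF ub le_refl]
  by (rule c_diff[where K=N]) (auto simp: useq_zero)

lemma bN_aff: assumes ub: "ubar \<in> carrier_vec ((N+1) * nu)"
  shows "bN m N nu ubar = bN m N nu (zero_seq N nu) + OmegaN m N nu *\<^sub>v ubar"
proof -
  let ?u = "useq nu ubar"
  let ?uz = "useq nu (zero_seq N nu)"
  let ?xs = "[0..<Suc N]"
  have "bN m N nu (zero_seq N nu) + OmegaN m N nu *\<^sub>v ubar =
     vconcat (map (bblk ?uz) ?xs) + vconcat (map (ob ?u) ?xs)"
    unfolding bN_eq b_struct Omega_mult[OF ub] by simp
  also have "\<dots> = vconcat (map (\<lambda>j. bblk ?uz j + ob ?u j) ?xs)"
  proof (rule vconcat_add, rule ballI)
    fix j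
    have "ck ?uz j \<in> carrier_vec (n + nw)" by (rule dims') simp
    then show "dim_vec (bblk ?uz j) = dim_vec (ob ?u j)"
      unfolding bblk_def ob_def qq_def using bz ba Ac Bc by simp
  qed
  also have "map (\<lambda>j. bblk ?uz j + ob ?u j) ?xs = map (bblk ?u) ?xs"
  proof (rule map_cong[OF refl])
    fix j assume "j \<in> set ?xs"
    then have j: "j \<le> N" by auto
    have c0: "ck ?uz j \<in> carrier_vec (n + nw)" by (rule dims') simp
    have d: "dlt ?u j \<in> carrier_vec (n + nw)" by (rule dlt_carrier) simp
    have uj: "?u j \<in> carrier_vec nu" by simp
    have cd: "ck ?u j = ck ?uz j + dlt ?u j" by (rule c_diff[where K=N]) (auto simp: useq_zero j)
    have z: "?uz j = 0\<^sub>v nu" using useq_zero[OF j] .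
    have Bz: "Bc m *\<^sub>v 0\<^sub>v nu = 0\<^sub>v r" using Bc by simp
    have rA: "\<And>i. row (Ac m) i \<in> carrier_vec (n + nw)" using Ac by (intro carrier_vecI) simp
    show "bblk ?uz j + ob ?u j = bblk ?u j"
      unfolding bblk_def ob_def cd z Bz mult_add_distrib_mat_vec[OF Ac c0 d]
      by (rule eq_vecI) (use bz ba Ac Bc c0 d uj rA in \<open>auto simp: qq_def\<close>)
  qed
  finally show ?thesis unfolding bN_eq b_struct by simp
qed

end

(* ---- part G ---- *)

lemma ex_split: "(\<exists>z. z \<in> carrier_vec (a + b) \<and> P z) \<longleftrightarrow> (\<exists>x y. x \<in> carrier_vec a \<and> y \<in> carrier_vec b \<and> P (x @\<^sub>v y))"
proof
  assume "\<exists>z. z \<in> carrier_vec (a + b) \<and> P z"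
  then obtain z where z: "z \<in> carrier_vec (a + b)" "P z" by blast
  then have "P (vec_first z a @\<^sub>v vec_last z b)" by simp
  then show "\<exists>x y. x \<in> carrier_vec a \<and> y \<in> carrier_vec b \<and> P (x @\<^sub>v y)"
    by (intro exI[of _ "vec_first z a"] exI[of _ "vec_last z b"]) simp
next
  assume "\<exists>x y. x \<in> carrier_vec a \<and> y \<in> carrier_vec b \<and> P (x @\<^sub>v y)"
  then obtain x y where "x \<in> carrier_vec a" "y \<in> carrier_vec b" "P (x @\<^sub>v y)" by blast
  then show "\<exists>z. z \<in> carrier_vec (a + b) \<and> P z" by (intro exI[of _ "x @\<^sub>v y"]) auto
qed

lemma bound_split: "x \<in> carrier_vec a \<Longrightarrow> y \<in> carrier_vec b \<Longrightarrow>
  (\<forall>t < a + b. \<bar>(x @\<^sub>v y) $ t\<bar> \<le> (1::real)) \<longleftrightarrow> (\<forall>t < a. \<bar>x $ t\<bar> \<le> 1) \<and> (\<forall>t < b. \<bar>y $ t\<bar> \<le> 1)"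
proof safe
  fix t assume x: "x \<in> carrier_vec a" and y: "y \<in> carrier_vec b" and h: "\<forall>t<a + b. \<bar>(x @\<^sub>v y) $ t\<bar> \<le> 1"
  { assume t: "t < a" then show "\<bar>x $ t\<bar> \<le> 1" using h[rule_format, of t] x y by simp }
  { assume t: "t < b" then show "\<bar>y $ t\<bar> \<le> 1" using h[rule_format, of "a + t"] x y by simp }
next
  fix t assume x: "x \<in> carrier_vec a" and y: "y \<in> carrier_vec b" and h1: "\<forall>t<a. \<bar>x $ t\<bar> \<le> 1"
    and h2: "\<forall>t<b. \<bar>y $ t\<bar> \<le> 1" and t: "t < a + b"
  show "\<bar>(x @\<^sub>v y) $ t\<bar> \<le> 1"
  proof (cases "t < a")
    case True then show ?thesis using h1 x y by simp
  next
    case False then show ?thesis using h2[rule_format, of "t - a"] x y t by simp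
  qed
qed

lemma veq1: "a \<in> carrier_vec k \<Longrightarrow> b \<in> carrier_vec k \<Longrightarrow> x \<in> carrier_vec k \<Longrightarrow>
  (a = - b + x) \<longleftrightarrow> (x = b + (a :: real vec))"
  by (auto simp: vec_eq_iff)

lemma veq0: "b \<in> carrier_vec k \<Longrightarrow> x \<in> carrier_vec k \<Longrightarrow>
  (0\<^sub>v k = - b + x) \<longleftrightarrow> (x = (b :: real vec))"
  by (auto simp: vec_eq_iff)

lemma veq_main:
  fixes h1 h2 e1 e2 g1 g2 d1 d2 k1 k2 l1 l2 :: "real vec"
  assumes "h1 \<in> carrier_vec p" "h2 \<in> carrier_vec p" "e1 \<in> carrier_vec p" "e2 \<in> carrier_vec p"
    "g1 \<in> carrier_vec p" "g2 \<in> carrier_vec p" "d1 \<in> carrier_vec p" "d2 \<in> carrier_vec p"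
    "k1 \<in> carrier_vec p" "k2 \<in> carrier_vec p" "l1 \<in> carrier_vec p" "l2 \<in> carrier_vec p"
  shows "(h2 - h1 + (d2 - d1) = (e1 + 0\<^sub>v p + k1 - (e2 + 0\<^sub>v p + k2)) + (g1 + l1 - (g2 + l2)))
    \<longleftrightarrow> (e1 + h1 + g1 + d1 + (k1 + l1) = e2 + h2 + g2 + d2 + (k2 + l2))"
proof -
  have "(h2 - h1 + (d2 - d1) = (e1 + 0\<^sub>v p + k1 - (e2 + 0\<^sub>v p + k2)) + (g1 + l1 - (g2 + l2)))
    \<longleftrightarrow> (\<forall>i<p. h2 $ i - h1 $ i + (d2 $ i - d1 $ i) = (e1 $ i + 0 + k1 $ i - (e2 $ i + 0 + k2 $ i)) + (g1 $ i + l1 $ i - (g2 $ i + l2 $ i)))"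
    using assms by (simp add: vec_eq_iff)
  also have "\<dots> \<longleftrightarrow> (\<forall>i<p. e1 $ i + h1 $ i + g1 $ i + d1 $ i + k1 $ i + l1 $ i = e2 $ i + h2 $ i + g2 $ i + d2 $ i + k2 $ i + l2 $ i)"
    by (intro all_cong) linarith
  also have "\<dots> \<longleftrightarrow> (e1 + h1 + g1 + d1 + (k1 + l1) = e2 + h2 + g2 + d2 + (k2 + l2))"
    using assms by (simp add: vec_eq_iff add.assoc)
  finally show ?thesis .
qed


(* ---- part H ---- *)

context mctx begin

lemma Omega_carrier: assumes ub: "(ubar :: real vec) \<in> carrier_vec ((N+1) * nu)"
  shows "OmegaN m N nu \<in> carrier_mat (qd N) ((N+1) * nu)"
proof (rule carrier_matI)
  have "dim_vec (bN m N nu ubar) = dim_vec (OmegaN m N nu *\<^sub>v ubar)"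
    unfolding bN_aff[OF ub] by simp
  then show "dim_row (OmegaN m N nu) = qd N" using N_dims(4)[of N ubar] by simp
  have "dim_col (Hbar m N nu) = (N+1) * nu"
    unfolding Hbar_def using vcat_list_carrier[of "map (Hmat m N nu) [0..<N+1]" "(N+1) * nu"]
    by (simp del: upt_Suc)
  then show "dim_col (OmegaN m N nu) = (N+1) * nu" unfolding OmegaN_def by simp
qed

lemma YN_mem: assumes Gv: "Gv \<in> carrier_mat nv gv"
  shows "y \<in> YN m N nu Gv cv Av bv ubar \<longleftrightarrow>
   (\<exists>\<xi> \<eta>. \<xi> \<in> carrier_vec (gd N) \<and> (\<forall>t<gd N. \<bar>\<xi> $ t\<bar> \<le> 1) \<and>
     AN m N nu (zero_seq N nu) *\<^sub>v \<xi> = bN m N nu ubar \<and>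
     \<eta> \<in> carrier_vec gv \<and> (\<forall>t<gv. \<bar>\<eta> $ t\<bar> \<le> 1) \<and> Av *\<^sub>v \<eta> = bv \<and>
     y = Fm m *\<^sub>v (cN m N nu ubar + GN m N nu (zero_seq N nu) *\<^sub>v \<xi>) + Dm m *\<^sub>v useq nu ubar N
         + Dvm m *\<^sub>v (cv + Gv *\<^sub>v \<eta>))"
proof -
  have dG: "dim_col (GN m N nu (zero_seq N nu)) = gd N" by (rule carrier_matD(2)[OF N_dims(1)])
  have dGv: "dim_col Gv = gv" using Gv by simp
  show ?thesis
    unfolding YN_def ZN_def czono_def GN_indep(1)[of N ubar "zero_seq N nu"] GN_indep(2)[of N ubar "zero_seq N nu"] dG dGv
    by blast
qed

lemma GYN_mult: assumes Gv: "Gv \<in> carrier_mat nv gv" and x: "x \<in> carrier_vec (gd N)" and y: "y \<in> carrier_vec gv"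
  shows "GYN m N nu Gv *\<^sub>v (x @\<^sub>v y) = Fm m *\<^sub>v (GN m N nu (zero_seq N nu) *\<^sub>v x) + Dvm m *\<^sub>v (Gv *\<^sub>v y)"
proof -
  have G: "GN m N nu (zero_seq N nu) \<in> carrier_mat (n + nw) (gd N)" by (rule N_dims)
  show ?thesis unfolding GYN_def
    by (subst hcat_mult[OF mult_carrier_mat[OF Fm G] mult_carrier_mat[OF Dvm Gv] x y])
       (simp add: assoc_mult_mat_vec[OF Fm G x] assoc_mult_mat_vec[OF Dvm Gv y])
qed

lemma GYN_carrier: "Gv \<in> carrier_mat nv gv \<Longrightarrow> GYN m N nu Gv \<in> carrier_mat ny (gd N + gv)"
  unfolding GYN_def by (rule hcat_carrier[OF mult_carrier_mat[OF Fm N_dims(1)] mult_carrier_mat[OF Dvm]])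

lemma AYN_mult: assumes Av: "Av \<in> carrier_mat qv gv" and x: "x \<in> carrier_vec (gd N)" and y: "y \<in> carrier_vec gv"
  shows "AYN m N nu Av *\<^sub>v (x @\<^sub>v y) = (AN m N nu (zero_seq N nu) *\<^sub>v x) @\<^sub>v (Av *\<^sub>v y)"
  unfolding AYN_def by (rule blkdiag_mult[OF N_dims(3) Av x y])

lemma AYN_carrier: "Av \<in> carrier_mat qv gv \<Longrightarrow> AYN m N nu Av \<in> carrier_mat (qd N + qv) (gd N + gv)"
  unfolding AYN_def by (rule blkdiag_carrier[OF N_dims(3)])

lemma cYN0_eq: "cYN0 m N nu cv = Fm m *\<^sub>v cN m N nu (zero_seq N nu) + 0\<^sub>v ny + Dvm m *\<^sub>v cv"
  unfolding cYN0_def using Dm by simp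

end

(* ---- part I ---- *)

locale pctx = I: mctx mi ny nu nv n1 nw1 r1 gz1 qz1 ga1 qa1 + J: mctx mj ny nu nv n2 nw2 r2 gz2 qz2 ga2 qa2
  for mi mj ny nu nv n1 nw1 r1 gz1 qz1 ga1 qa1 n2 nw2 r2 gz2 qz2 ga2 qa2 +
  fixes N :: nat and Gv Av :: "real mat" and cv bv ubar :: "real vec" and gv qv :: nat
  assumes Gv: "Gv \<in> carrier_mat nv gv" and cv: "cv \<in> carrier_vec nv"
    and Av: "Av \<in> carrier_mat qv gv" and bv: "bv \<in> carrier_vec qv"
    and ub: "ubar \<in> carrier_vec ((N + 1) * nu)"
begin

abbreviation "z0 \<equiv> zero_seq N nu"
abbreviation "uN \<equiv> useq nu ubar N"
abbreviation "g1 \<equiv> gz1 + N * ga1"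
abbreviation "g2 \<equiv> gz2 + N * ga2"
abbreviation "q1 \<equiv> qz1 + r1 + N * (qa1 + r1)"
abbreviation "q2 \<equiv> qz2 + r2 + N * (qa2 + r2)"

lemma Nij_carrier: "Nij mi mj N nu \<in> carrier_mat ny ((N+1) * nu)"
proof -
  have a: "Fm mj * Hmat mj N nu N \<in> carrier_mat ny ((N+1) * nu)" using J.Fm J.Hmat_carrier by simp
  have b: "Fm mi * Hmat mi N nu N \<in> carrier_mat ny ((N+1) * nu)" using I.Fm I.Hmat_carrier by simp
  have c: "hcat (0\<^sub>m (dim_row (Dm mi)) (N * nu)) (Dm mj - Dm mi) \<in> carrier_mat ny ((N+1) * nu)"
  proof -
    have dr: "dim_row (Dm mi) = ny" using I.Dm by simp
    have z: "0\<^sub>m ny (N * nu) \<in> carrier_mat ny (N * nu)" by simp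
    have D: "Dm mj - Dm mi \<in> carrier_mat ny nu" using minus_carrier_mat[OF I.Dm] .
    show ?thesis unfolding dr using hcat_carrier[OF z D] by (simp add: algebra_simps)
  qed
  show ?thesis unfolding Nij_def using a b c by simp
qed

lemma Nij_mult: "Nij mi mj N nu *\<^sub>v ubar =
   Fm mj *\<^sub>v (Hmat mj N nu N *\<^sub>v ubar) - Fm mi *\<^sub>v (Hmat mi N nu N *\<^sub>v ubar) + (Dm mj *\<^sub>v uN - Dm mi *\<^sub>v uN)"
proof -
  have a: "Fm mj * Hmat mj N nu N \<in> carrier_mat ny ((N+1) * nu)" using J.Fm J.Hmat_carrier by simp
  have b: "Fm mi * Hmat mi N nu N \<in> carrier_mat ny ((N+1) * nu)" using I.Fm I.Hmat_carrier by simp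
  have dr: "dim_row (Dm mi) = ny" using I.Dm by simp
  have z: "0\<^sub>m ny (N * nu) \<in> carrier_mat ny (N * nu)" by simp
  have D: "Dm mj - Dm mi \<in> carrier_mat ny nu" using minus_carrier_mat[OF I.Dm] .
  have c: "hcat (0\<^sub>m ny (N * nu)) (Dm mj - Dm mi) \<in> carrier_mat ny ((N+1) * nu)"
    using hcat_carrier[OF z D] by (simp add: algebra_simps)
  have hc: "hcat (0\<^sub>m ny (N * nu)) (Dm mj - Dm mi) *\<^sub>v ubar = Dm mj *\<^sub>v uN - Dm mi *\<^sub>v uN"
  proof -
    have "hcat (0\<^sub>m ny (N * nu)) (Dm mj - Dm mi) *\<^sub>v ubar
       = hcat (0\<^sub>m ny (N * nu)) (Dm mj - Dm mi) *\<^sub>v (vec_first ubar (N * nu) @\<^sub>v uN)"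
      using ubar_split_last[OF ub] by simp
    also have "\<dots> = 0\<^sub>m ny (N * nu) *\<^sub>v vec_first ubar (N * nu) + (Dm mj - Dm mi) *\<^sub>v uN"
      by (rule hcat_mult[OF z D]) simp_all
    also have "\<dots> = (Dm mj - Dm mi) *\<^sub>v uN"
      using D by simp
    also have "\<dots> = Dm mj *\<^sub>v uN - Dm mi *\<^sub>v uN"
      by (rule minus_mult_distrib_mat_vec[OF J.Dm I.Dm]) simp
    finally show ?thesis .
  qed
  have "Nij mi mj N nu *\<^sub>v ubar = (Fm mj * Hmat mj N nu N - Fm mi * Hmat mi N nu N) *\<^sub>v ubar
      + hcat (0\<^sub>m ny (N * nu)) (Dm mj - Dm mi) *\<^sub>v ubar"
    unfolding Nij_def dr by (rule add_mult_distrib_mat_vec[OF minus_carrier_mat[OF b] c ub])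
  also have "(Fm mj * Hmat mj N nu N - Fm mi * Hmat mi N nu N) *\<^sub>v ubar
     = (Fm mj * Hmat mj N nu N) *\<^sub>v ubar - (Fm mi * Hmat mi N nu N) *\<^sub>v ubar"
    by (rule minus_mult_distrib_mat_vec[OF a b ub])
  also have "(Fm mj * Hmat mj N nu N) *\<^sub>v ubar = Fm mj *\<^sub>v (Hmat mj N nu N *\<^sub>v ubar)"
    by (rule assoc_mult_mat_vec[OF J.Fm J.Hmat_carrier ub])
  also have "(Fm mi * Hmat mi N nu N) *\<^sub>v ubar = Fm mi *\<^sub>v (Hmat mi N nu N *\<^sub>v ubar)"
    by (rule assoc_mult_mat_vec[OF I.Fm I.Hmat_carrier ub])
  finally show ?thesis unfolding hc .
qed

lemma Omegaij_carrier: "Omegaij mi mj N nu bv \<in> carrier_mat (q1 + (qv + (q2 + qv))) ((N+1) * nu)"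
  unfolding Omegaij_def using I.Omega_carrier[OF ub] J.Omega_carrier[OF ub] bv
  by (intro carrier_append_rows) auto

lemma Omegaij_mult: "Omegaij mi mj N nu bv *\<^sub>v ubar =
   (OmegaN mi N nu *\<^sub>v ubar) @\<^sub>v 0\<^sub>v qv @\<^sub>v (OmegaN mj N nu *\<^sub>v ubar) @\<^sub>v 0\<^sub>v qv"
proof -
  have O1: "OmegaN mi N nu \<in> carrier_mat q1 ((N+1) * nu)" by (rule I.Omega_carrier[OF ub])
  have O2: "OmegaN mj N nu \<in> carrier_mat q2 ((N+1) * nu)" by (rule J.Omega_carrier[OF ub])
  have z: "0\<^sub>m qv ((N + 1) * nu) \<in> carrier_mat qv ((N+1) * nu)" by simp
  have dv: "dim_vec bv = qv" using bv by simp
  have C2: "OmegaN mj N nu @\<^sub>r 0\<^sub>m qv ((N + 1) * nu) \<in> carrier_mat (q2 + qv) ((N+1) * nu)"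
    by (rule carrier_append_rows[OF O2 z])
  have C1: "0\<^sub>m qv ((N + 1) * nu) @\<^sub>r OmegaN mj N nu @\<^sub>r 0\<^sub>m qv ((N + 1) * nu) \<in> carrier_mat (qv + (q2 + qv)) ((N+1) * nu)"
    by (rule carrier_append_rows[OF z C2])
  show ?thesis unfolding Omegaij_def dv
    by (simp only: mat_mult_append[OF O1 C1 ub] mat_mult_append[OF z C2 ub] mat_mult_append[OF O2 z ub])
       (simp add: ub[simplified])
qed

lemma w_eq: "(Nij mi mj N nu @\<^sub>r Omegaij mi mj N nu bv) *\<^sub>v ubar =
  (Fm mj *\<^sub>v (Hmat mj N nu N *\<^sub>v ubar) - Fm mi *\<^sub>v (Hmat mi N nu N *\<^sub>v ubar) + (Dm mj *\<^sub>v uN - Dm mi *\<^sub>v uN))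
  @\<^sub>v ((OmegaN mi N nu *\<^sub>v ubar) @\<^sub>v 0\<^sub>v qv @\<^sub>v (OmegaN mj N nu *\<^sub>v ubar) @\<^sub>v 0\<^sub>v qv)"
  by (simp only: mat_mult_append[OF Nij_carrier Omegaij_carrier ub] Nij_mult Omegaij_mult)

end

(* ---- part J ---- *)

context pctx begin

lemma rhs_eq: assumes x1: "x1 \<in> carrier_vec g1" and y1: "y1 \<in> carrier_vec gv"
  and x2: "x2 \<in> carrier_vec g2" and y2: "y2 \<in> carrier_vec gv"
  shows "(cYij mi mj N nu cv @\<^sub>v - bYij mi mj N nu bv) + (GYij mi mj N nu Gv @\<^sub>r AYij mi mj N nu Av) *\<^sub>v ((x1 @\<^sub>v y1) @\<^sub>v (x2 @\<^sub>v y2)) =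
  (cYN0 mi N nu cv - cYN0 mj N nu cv + (GYN mi N nu Gv *\<^sub>v (x1 @\<^sub>v y1) - GYN mj N nu Gv *\<^sub>v (x2 @\<^sub>v y2)))
  @\<^sub>v ((- bN mi N nu z0 + AN mi N nu z0 *\<^sub>v x1) @\<^sub>v (- bv + Av *\<^sub>v y1) @\<^sub>v
       (- bN mj N nu z0 + AN mj N nu z0 *\<^sub>v x2) @\<^sub>v (- bv + Av *\<^sub>v y2))"
proof -
  let ?z = "(x1 @\<^sub>v y1) @\<^sub>v (x2 @\<^sub>v y2)"
  have GY1: "GYN mi N nu Gv \<in> carrier_mat ny (g1 + gv)" by (rule I.GYN_carrier[OF Gv])
  have GY2: "GYN mj N nu Gv \<in> carrier_mat ny (g2 + gv)" by (rule J.GYN_carrier[OF Gv])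
  have AY1: "AYN mi N nu Av \<in> carrier_mat (q1 + qv) (g1 + gv)" by (rule I.AYN_carrier[OF Av])
  have AY2: "AYN mj N nu Av \<in> carrier_mat (q2 + qv) (g2 + gv)" by (rule J.AYN_carrier[OF Av])
  have GY: "GYij mi mj N nu Gv \<in> carrier_mat ny ((g1 + gv) + (g2 + gv))"
    unfolding GYij_def by (rule hcat_carrier[OF GY1]) (use GY2 in simp)
  have AY: "AYij mi mj N nu Av \<in> carrier_mat ((q1 + qv) + (q2 + qv)) ((g1 + gv) + (g2 + gv))"
    unfolding AYij_def by (rule blkdiag_carrier[OF AY1 AY2])
  have xy1: "x1 @\<^sub>v y1 \<in> carrier_vec (g1 + gv)" using x1 y1 by simp
  have xy2: "x2 @\<^sub>v y2 \<in> carrier_vec (g2 + gv)" using x2 y2 by simp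
  have zc: "?z \<in> carrier_vec ((g1 + gv) + (g2 + gv))" using xy1 xy2 by simp
  have Mz: "(GYij mi mj N nu Gv @\<^sub>r AYij mi mj N nu Av) *\<^sub>v ?z = (GYij mi mj N nu Gv *\<^sub>v ?z) @\<^sub>v (AYij mi mj N nu Av *\<^sub>v ?z)"
    by (rule mat_mult_append[OF GY AY zc])
  have mGY2: "- GYN mj N nu Gv \<in> carrier_mat ny (g2 + gv)" using GY2 by simp
  have GYz: "GYij mi mj N nu Gv *\<^sub>v ?z = GYN mi N nu Gv *\<^sub>v (x1 @\<^sub>v y1) - GYN mj N nu Gv *\<^sub>v (x2 @\<^sub>v y2)"
  proof -
    have um: "- GYN mj N nu Gv *\<^sub>v (x2 @\<^sub>v y2) = - (GYN mj N nu Gv *\<^sub>v (x2 @\<^sub>v y2))"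
      by (rule uminus_mult_mat_vec) (use GY2 x2 y2 in simp)
    show ?thesis unfolding GYij_def hcat_mult[OF GY1 mGY2 xy1 xy2] um
      using GY1 GY2 xy1 xy2 by (subst minus_add_uminus_vec[of _ ny]) auto
  qed
  have AYz: "AYij mi mj N nu Av *\<^sub>v ?z = (AN mi N nu z0 *\<^sub>v x1 @\<^sub>v Av *\<^sub>v y1) @\<^sub>v (AN mj N nu z0 *\<^sub>v x2 @\<^sub>v Av *\<^sub>v y2)"
    unfolding AYij_def blkdiag_mult[OF AY1 AY2 xy1 xy2] I.AYN_mult[OF Av x1 y1] J.AYN_mult[OF Av x2 y2] ..
  have b10: "bN mi N nu z0 \<in> carrier_vec q1" by (rule I.N_dims)
  have b20: "bN mj N nu z0 \<in> carrier_vec q2" by (rule J.N_dims)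
  have A10: "AN mi N nu z0 *\<^sub>v x1 \<in> carrier_vec q1" using mult_mat_vec_carrier[OF I.N_dims(3)[of N z0] x1] .
  have A20: "AN mj N nu z0 *\<^sub>v x2 \<in> carrier_vec q2" using mult_mat_vec_carrier[OF J.N_dims(3)[of N z0] x2] .
  have Av1: "Av *\<^sub>v y1 \<in> carrier_vec qv" using Av y1 by simp
  have Av2: "Av *\<^sub>v y2 \<in> carrier_vec qv" using Av y2 by simp
  have mb: "- bYij mi mj N nu bv = ((- bN mi N nu z0) @\<^sub>v (- bv)) @\<^sub>v ((- bN mj N nu z0) @\<^sub>v (- bv))"
    unfolding bYij_def bYN0_def uminus_append_vec ..
  have cY: "cYij mi mj N nu cv \<in> carrier_vec ny"
    unfolding cYij_def I.cYN0_eq J.cYN0_eq using I.Fm J.Fm I.Dvm J.Dvm cv I.N_dims(2) J.N_dims(2) by simp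
  have GYzc: "GYij mi mj N nu Gv *\<^sub>v ?z \<in> carrier_vec ny" using GY zc by simp
  have s1: "(- bN mi N nu z0 @\<^sub>v - bv) + (AN mi N nu z0 *\<^sub>v x1 @\<^sub>v Av *\<^sub>v y1)
     = (- bN mi N nu z0 + AN mi N nu z0 *\<^sub>v x1) @\<^sub>v (- bv + Av *\<^sub>v y1)"
    by (rule append_vec_add[of _ q1 _ _ qv]) (use b10 A10 bv Av1 in simp_all)
  have s2: "(- bN mj N nu z0 @\<^sub>v - bv) + (AN mj N nu z0 *\<^sub>v x2 @\<^sub>v Av *\<^sub>v y2)
     = (- bN mj N nu z0 + AN mj N nu z0 *\<^sub>v x2) @\<^sub>v (- bv + Av *\<^sub>v y2)"
    by (rule append_vec_add[of _ q2 _ _ qv]) (use b20 A20 bv Av2 in simp_all)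
  have s3: "(((- bN mi N nu z0) @\<^sub>v (- bv)) @\<^sub>v ((- bN mj N nu z0) @\<^sub>v (- bv))) + 
     ((AN mi N nu z0 *\<^sub>v x1 @\<^sub>v Av *\<^sub>v y1) @\<^sub>v (AN mj N nu z0 *\<^sub>v x2 @\<^sub>v Av *\<^sub>v y2))
     = ((- bN mi N nu z0 + AN mi N nu z0 *\<^sub>v x1) @\<^sub>v (- bv + Av *\<^sub>v y1)) @\<^sub>v
       ((- bN mj N nu z0 + AN mj N nu z0 *\<^sub>v x2) @\<^sub>v (- bv + Av *\<^sub>v y2))"
    unfolding s1[symmetric] s2[symmetric]
    by (rule append_vec_add[of _ "q1 + qv" _ _ "q2 + qv"]) (use b10 A10 bv Av1 b20 A20 Av2 in simp_all)
  have "(cYij mi mj N nu cv @\<^sub>v - bYij mi mj N nu bv) + (GYij mi mj N nu Gv @\<^sub>r AYij mi mj N nu Av) *\<^sub>v ?z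
     = (cYij mi mj N nu cv + GYij mi mj N nu Gv *\<^sub>v ?z) @\<^sub>v (- bYij mi mj N nu bv + AYij mi mj N nu Av *\<^sub>v ?z)"
    unfolding Mz by (rule append_vec_add[OF cY GYzc, of _ "(q1 + qv) + (q2 + qv)"]) (use b10 A10 bv Av1 b20 A20 Av2 in \<open>simp_all add: mb AYz\<close>)
  also have "\<dots> = (cYN0 mi N nu cv - cYN0 mj N nu cv + (GYN mi N nu Gv *\<^sub>v (x1 @\<^sub>v y1) - GYN mj N nu Gv *\<^sub>v (x2 @\<^sub>v y2)))
     @\<^sub>v (((- bN mi N nu z0 + AN mi N nu z0 *\<^sub>v x1) @\<^sub>v (- bv + Av *\<^sub>v y1)) @\<^sub>v
       ((- bN mj N nu z0 + AN mj N nu z0 *\<^sub>v x2) @\<^sub>v (- bv + Av *\<^sub>v y2)))"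
    unfolding mb AYz s3 GYz cYij_def ..
  finally show ?thesis by (simp only: append_vec_assoc)
qed

end

(* ---- part K ---- *)

context pctx begin

lemma GY_carrier: "GYij mi mj N nu Gv \<in> carrier_mat ny ((g1 + gv) + (g2 + gv))"
  unfolding GYij_def by (rule hcat_carrier[OF I.GYN_carrier[OF Gv]]) (use J.GYN_carrier[OF Gv] in simp)

lemma AY_carrier: "AYij mi mj N nu Av \<in> carrier_mat ((q1 + qv) + (q2 + qv)) ((g1 + gv) + (g2 + gv))"
  unfolding AYij_def by (rule blkdiag_carrier[OF I.AYN_carrier[OF Av] J.AYN_carrier[OF Av]])

definition "Y1 x y = Fm mi *\<^sub>v (cN mi N nu ubar + GN mi N nu z0 *\<^sub>v x) + Dm mi *\<^sub>v uN + Dvm mi *\<^sub>v (cv + Gv *\<^sub>v y)"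
definition "Y2 x y = Fm mj *\<^sub>v (cN mj N nu ubar + GN mj N nu z0 *\<^sub>v x) + Dm mj *\<^sub>v uN + Dvm mj *\<^sub>v (cv + Gv *\<^sub>v y)"

definition "Phi x1 y1 x2 y2 \<longleftrightarrow>
  x1 \<in> carrier_vec g1 \<and> (\<forall>t<g1. \<bar>x1 $ t\<bar> \<le> 1) \<and> y1 \<in> carrier_vec gv \<and> (\<forall>t<gv. \<bar>y1 $ t\<bar> \<le> 1) \<and>
  x2 \<in> carrier_vec g2 \<and> (\<forall>t<g2. \<bar>x2 $ t\<bar> \<le> 1) \<and> y2 \<in> carrier_vec gv \<and> (\<forall>t<gv. \<bar>y2 $ t\<bar> \<le> 1) \<and>
  AN mi N nu z0 *\<^sub>v x1 = bN mi N nu ubar \<and> Av *\<^sub>v y1 = bv \<and>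
  AN mj N nu z0 *\<^sub>v x2 = bN mj N nu ubar \<and> Av *\<^sub>v y2 = bv \<and> Y1 x1 y1 = Y2 x2 y2"

lemma inter_iff: "(YN mi N nu Gv cv Av bv ubar \<inter> YN mj N nu Gv cv Av bv ubar \<noteq> {}) \<longleftrightarrow>
  (\<exists>x1 y1 x2 y2. Phi x1 y1 x2 y2)"
proof -
  have "(YN mi N nu Gv cv Av bv ubar \<inter> YN mj N nu Gv cv Av bv ubar \<noteq> {}) \<longleftrightarrow>
    (\<exists>y. y \<in> YN mi N nu Gv cv Av bv ubar \<and> y \<in> YN mj N nu Gv cv Av bv ubar)" by blast
  also have "\<dots> \<longleftrightarrow> (\<exists>x1 y1 x2 y2. Phi x1 y1 x2 y2)"
  proof
    assume "\<exists>y. y \<in> YN mi N nu Gv cv Av bv ubar \<and> y \<in> YN mj N nu Gv cv Av bv ubar"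
    then obtain y where y1: "y \<in> YN mi N nu Gv cv Av bv ubar" and y2: "y \<in> YN mj N nu Gv cv Av bv ubar" by blast
    from y1[unfolded I.YN_mem[OF Gv]] obtain x1 e1 where h1:
      "x1 \<in> carrier_vec g1" "\<forall>t<g1. \<bar>x1 $ t\<bar> \<le> 1" "AN mi N nu z0 *\<^sub>v x1 = bN mi N nu ubar"
      "e1 \<in> carrier_vec gv" "\<forall>t<gv. \<bar>e1 $ t\<bar> \<le> 1" "Av *\<^sub>v e1 = bv" "y = Y1 x1 e1"
      unfolding Y1_def by blast
    from y2[unfolded J.YN_mem[OF Gv]] obtain x2 e2 where h2:
      "x2 \<in> carrier_vec g2" "\<forall>t<g2. \<bar>x2 $ t\<bar> \<le> 1" "AN mj N nu z0 *\<^sub>v x2 = bN mj N nu ubar"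
      "e2 \<in> carrier_vec gv" "\<forall>t<gv. \<bar>e2 $ t\<bar> \<le> 1" "Av *\<^sub>v e2 = bv" "y = Y2 x2 e2"
      unfolding Y2_def by blast
    have "Phi x1 e1 x2 e2" unfolding Phi_def using h1 h2 by simp
    then show "\<exists>x1 y1 x2 y2. Phi x1 y1 x2 y2" by blast
  next
    assume "\<exists>x1 y1 x2 y2. Phi x1 y1 x2 y2"
    then obtain x1 e1 x2 e2 where p: "Phi x1 e1 x2 e2" by blast
    have "Y1 x1 e1 \<in> YN mi N nu Gv cv Av bv ubar"
      unfolding I.YN_mem[OF Gv] using p unfolding Phi_def Y1_def by blast
    moreover have "Y1 x1 e1 \<in> YN mj N nu Gv cv Av bv ubar"
      unfolding J.YN_mem[OF Gv] using p unfolding Phi_def Y2_def by metis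
    ultimately show "\<exists>y. y \<in> YN mi N nu Gv cv Av bv ubar \<and> y \<in> YN mj N nu Gv cv Av bv ubar" by blast
  qed
  finally show ?thesis .
qed

lemma Y1_eq: assumes x: "x \<in> carrier_vec g1" and y: "y \<in> carrier_vec gv"
  shows "Y1 x y = Fm mi *\<^sub>v cN mi N nu z0 + Fm mi *\<^sub>v (Hmat mi N nu N *\<^sub>v ubar) + Fm mi *\<^sub>v (GN mi N nu z0 *\<^sub>v x)
     + Dm mi *\<^sub>v uN + (Dvm mi *\<^sub>v cv + Dvm mi *\<^sub>v (Gv *\<^sub>v y))"
proof -
  have c0: "cN mi N nu z0 \<in> carrier_vec (n1 + nw1)" by (rule I.N_dims)
  have H: "Hmat mi N nu N *\<^sub>v ubar \<in> carrier_vec (n1 + nw1)" using mult_mat_vec_carrier[OF I.Hmat_carrier ub] .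
  have G: "GN mi N nu z0 *\<^sub>v x \<in> carrier_vec (n1 + nw1)" using mult_mat_vec_carrier[OF I.N_dims(1)[of N z0] x] .
  have Gy: "Gv *\<^sub>v y \<in> carrier_vec nv" using Gv y by simp
  show ?thesis unfolding Y1_def I.cN_aff[OF ub]
    mult_add_distrib_mat_vec[OF I.Fm add_carrier_vec[OF c0 H] G] mult_add_distrib_mat_vec[OF I.Fm c0 H]
    mult_add_distrib_mat_vec[OF I.Dvm cv Gy] ..
qed

lemma Y2_eq: assumes x: "x \<in> carrier_vec g2" and y: "y \<in> carrier_vec gv"
  shows "Y2 x y = Fm mj *\<^sub>v cN mj N nu z0 + Fm mj *\<^sub>v (Hmat mj N nu N *\<^sub>v ubar) + Fm mj *\<^sub>v (GN mj N nu z0 *\<^sub>v x)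
     + Dm mj *\<^sub>v uN + (Dvm mj *\<^sub>v cv + Dvm mj *\<^sub>v (Gv *\<^sub>v y))"
proof -
  have c0: "cN mj N nu z0 \<in> carrier_vec (n2 + nw2)" by (rule J.N_dims)
  have H: "Hmat mj N nu N *\<^sub>v ubar \<in> carrier_vec (n2 + nw2)" using mult_mat_vec_carrier[OF J.Hmat_carrier ub] .
  have G: "GN mj N nu z0 *\<^sub>v x \<in> carrier_vec (n2 + nw2)" using mult_mat_vec_carrier[OF J.N_dims(1)[of N z0] x] .
  have Gy: "Gv *\<^sub>v y \<in> carrier_vec nv" using Gv y by simp
  show ?thesis unfolding Y2_def J.cN_aff[OF ub]
    mult_add_distrib_mat_vec[OF J.Fm add_carrier_vec[OF c0 H] G] mult_add_distrib_mat_vec[OF J.Fm c0 H]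
    mult_add_distrib_mat_vec[OF J.Dvm cv Gy] ..
qed

end

(* ---- part L ---- *)

context pctx begin

lemma eqv: assumes x1: "x1 \<in> carrier_vec g1" and y1: "y1 \<in> carrier_vec gv"
  and x2: "x2 \<in> carrier_vec g2" and y2: "y2 \<in> carrier_vec gv"
  shows "((Nij mi mj N nu @\<^sub>r Omegaij mi mj N nu bv) *\<^sub>v ubar =
     (cYij mi mj N nu cv @\<^sub>v - bYij mi mj N nu bv) + (GYij mi mj N nu Gv @\<^sub>r AYij mi mj N nu Av) *\<^sub>v ((x1 @\<^sub>v y1) @\<^sub>v (x2 @\<^sub>v y2)))
   \<longleftrightarrow> (AN mi N nu z0 *\<^sub>v x1 = bN mi N nu ubar \<and> Av *\<^sub>v y1 = bv \<and>
        AN mj N nu z0 *\<^sub>v x2 = bN mj N nu ubar \<and> Av *\<^sub>v y2 = bv \<and> Y1 x1 y1 = Y2 x2 y2)"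
proof -
  have c10: "cN mi N nu z0 \<in> carrier_vec (n1 + nw1)" by (rule I.N_dims)
  have c20: "cN mj N nu z0 \<in> carrier_vec (n2 + nw2)" by (rule J.N_dims)
  have b10: "bN mi N nu z0 \<in> carrier_vec q1" by (rule I.N_dims)
  have b20: "bN mj N nu z0 \<in> carrier_vec q2" by (rule J.N_dims)
  have H1: "Hmat mi N nu N *\<^sub>v ubar \<in> carrier_vec (n1 + nw1)" using mult_mat_vec_carrier[OF I.Hmat_carrier ub] .
  have H2: "Hmat mj N nu N *\<^sub>v ubar \<in> carrier_vec (n2 + nw2)" using mult_mat_vec_carrier[OF J.Hmat_carrier ub] .
  have G1: "GN mi N nu z0 *\<^sub>v x1 \<in> carrier_vec (n1 + nw1)" using mult_mat_vec_carrier[OF I.N_dims(1)[of N z0] x1] .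
  have G2: "GN mj N nu z0 *\<^sub>v x2 \<in> carrier_vec (n2 + nw2)" using mult_mat_vec_carrier[OF J.N_dims(1)[of N z0] x2] .
  have A1: "AN mi N nu z0 *\<^sub>v x1 \<in> carrier_vec q1" using mult_mat_vec_carrier[OF I.N_dims(3)[of N z0] x1] .
  have A2: "AN mj N nu z0 *\<^sub>v x2 \<in> carrier_vec q2" using mult_mat_vec_carrier[OF J.N_dims(3)[of N z0] x2] .
  have O1: "OmegaN mi N nu *\<^sub>v ubar \<in> carrier_vec q1" using mult_mat_vec_carrier[OF I.Omega_carrier[OF ub] ub] .
  have O2: "OmegaN mj N nu *\<^sub>v ubar \<in> carrier_vec q2" using mult_mat_vec_carrier[OF J.Omega_carrier[OF ub] ub] .
  have Av1: "Av *\<^sub>v y1 \<in> carrier_vec qv" using Av y1 by simp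
  have Av2: "Av *\<^sub>v y2 \<in> carrier_vec qv" using Av y2 by simp
  have Gy1: "Gv *\<^sub>v y1 \<in> carrier_vec nv" using Gv y1 by simp
  have Gy2: "Gv *\<^sub>v y2 \<in> carrier_vec nv" using Gv y2 by simp
  have uNc: "uN \<in> carrier_vec nu" by simp
  let ?h1 = "Fm mi *\<^sub>v (Hmat mi N nu N *\<^sub>v ubar)" and ?h2 = "Fm mj *\<^sub>v (Hmat mj N nu N *\<^sub>v ubar)"
  let ?e1 = "Fm mi *\<^sub>v cN mi N nu z0" and ?e2 = "Fm mj *\<^sub>v cN mj N nu z0"
  let ?g1 = "Fm mi *\<^sub>v (GN mi N nu z0 *\<^sub>v x1)" and ?g2 = "Fm mj *\<^sub>v (GN mj N nu z0 *\<^sub>v x2)"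
  let ?d1 = "Dm mi *\<^sub>v uN" and ?d2 = "Dm mj *\<^sub>v uN"
  let ?k1 = "Dvm mi *\<^sub>v cv" and ?k2 = "Dvm mj *\<^sub>v cv"
  let ?l1 = "Dvm mi *\<^sub>v (Gv *\<^sub>v y1)" and ?l2 = "Dvm mj *\<^sub>v (Gv *\<^sub>v y2)"
  have ch: "?h1 \<in> carrier_vec ny" "?h2 \<in> carrier_vec ny" "?e1 \<in> carrier_vec ny" "?e2 \<in> carrier_vec ny"
    "?g1 \<in> carrier_vec ny" "?g2 \<in> carrier_vec ny" "?d1 \<in> carrier_vec ny" "?d2 \<in> carrier_vec ny"
    "?k1 \<in> carrier_vec ny" "?k2 \<in> carrier_vec ny" "?l1 \<in> carrier_vec ny" "?l2 \<in> carrier_vec ny"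
    using I.Fm J.Fm I.Dm J.Dm I.Dvm J.Dvm H1 H2 c10 c20 G1 G2 uNc cv Gy1 Gy2
    by (auto intro!: mult_mat_vec_carrier)
  let ?Nv = "?h2 - ?h1 + (?d2 - ?d1)"
  let ?X = "cYN0 mi N nu cv - cYN0 mj N nu cv + (GYN mi N nu Gv *\<^sub>v (x1 @\<^sub>v y1) - GYN mj N nu Gv *\<^sub>v (x2 @\<^sub>v y2))"
  have X: "?X = (?e1 + 0\<^sub>v ny + ?k1 - (?e2 + 0\<^sub>v ny + ?k2)) + (?g1 + ?l1 - (?g2 + ?l2))"
    unfolding I.cYN0_eq J.cYN0_eq I.GYN_mult[OF Gv x1 y1] J.GYN_mult[OF Gv x2 y2] ..
  have Nvc: "?Nv \<in> carrier_vec ny" using ch by auto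
  have Xc: "?X \<in> carrier_vec ny" unfolding X using ch by auto
  have P: "(?Nv = ?X) \<longleftrightarrow> (Y1 x1 y1 = Y2 x2 y2)"
    unfolding X Y1_eq[OF x1 y1] Y2_eq[OF x2 y2] by (rule veq_main[OF ch])
  have Q1: "(OmegaN mi N nu *\<^sub>v ubar = - bN mi N nu z0 + AN mi N nu z0 *\<^sub>v x1) \<longleftrightarrow> (AN mi N nu z0 *\<^sub>v x1 = bN mi N nu ubar)"
    unfolding veq1[OF O1 b10 A1] I.bN_aff[OF ub] ..
  have Q2: "(OmegaN mj N nu *\<^sub>v ubar = - bN mj N nu z0 + AN mj N nu z0 *\<^sub>v x2) \<longleftrightarrow> (AN mj N nu z0 *\<^sub>v x2 = bN mj N nu ubar)"
    unfolding veq1[OF O2 b20 A2] J.bN_aff[OF ub] ..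
  have R1: "(0\<^sub>v qv = - bv + Av *\<^sub>v y1) \<longleftrightarrow> (Av *\<^sub>v y1 = bv)" by (rule veq0[OF bv Av1])
  have R2: "(0\<^sub>v qv = - bv + Av *\<^sub>v y2) \<longleftrightarrow> (Av *\<^sub>v y2 = bv)" by (rule veq0[OF bv Av2])
  have mb1: "- bN mi N nu z0 + AN mi N nu z0 *\<^sub>v x1 \<in> carrier_vec q1" using b10 A1 by simp
  have mb2: "- bN mj N nu z0 + AN mj N nu z0 *\<^sub>v x2 \<in> carrier_vec q2" using b20 A2 by simp
  have mv1: "- bv + Av *\<^sub>v y1 \<in> carrier_vec qv" using bv Av1 by simp
  show ?thesis
    unfolding w_eq rhs_eq[OF x1 y1 x2 y2]
    unfolding append_vec_eq[OF Nvc Xc] append_vec_eq[OF O1 mb1] append_vec_eq[OF zero_carrier_vec mv1]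
      append_vec_eq[OF O2 mb2] P Q1 Q2 R1 R2
    by blast
qed

end

(* ---- part M ---- *)

context pctx begin

lemma Yij_iff: "(Nij mi mj N nu @\<^sub>r Omegaij mi mj N nu bv) *\<^sub>v ubar \<in> Yij mi mj N nu Gv cv Av bv
   \<longleftrightarrow> (\<exists>x1 y1 x2 y2. Phi x1 y1 x2 y2)"
proof -
  let ?w = "(Nij mi mj N nu @\<^sub>r Omegaij mi mj N nu bv) *\<^sub>v ubar"
  let ?M = "GYij mi mj N nu Gv @\<^sub>r AYij mi mj N nu Av"
  let ?c = "cYij mi mj N nu cv @\<^sub>v - bYij mi mj N nu bv"
  have dM: "dim_col ?M = (g1 + gv) + (g2 + gv)"
    using carrier_append_rows[OF GY_carrier AY_carrier] by simp
  have mem: "?w \<in> Yij mi mj N nu Gv cv Av bv \<longleftrightarrow>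
    (\<exists>z. z \<in> carrier_vec ((g1 + gv) + (g2 + gv)) \<and> (\<forall>t<(g1 + gv) + (g2 + gv). \<bar>z $ t\<bar> \<le> 1) \<and> ?w = ?c + ?M *\<^sub>v z)"
    unfolding Yij_def zono_def dM by blast
  show ?thesis unfolding mem
  proof
    assume "\<exists>z. z \<in> carrier_vec ((g1 + gv) + (g2 + gv)) \<and> (\<forall>t<(g1 + gv) + (g2 + gv). \<bar>z $ t\<bar> \<le> 1) \<and> ?w = ?c + ?M *\<^sub>v z"
    then obtain z where zc: "z \<in> carrier_vec ((g1 + gv) + (g2 + gv))"
      and zb: "\<forall>t<(g1 + gv) + (g2 + gv). \<bar>z $ t\<bar> \<le> 1" and ze: "?w = ?c + ?M *\<^sub>v z" by blast
    define a where "a = vec_first z (g1 + gv)"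
    define b where "b = vec_last z (g2 + gv)"
    define x1 where "x1 = vec_first a g1"
    define y1 where "y1 = vec_last a gv"
    define x2 where "x2 = vec_first b g2"
    define y2 where "y2 = vec_last b gv"
    have ac: "a \<in> carrier_vec (g1 + gv)" and bc: "b \<in> carrier_vec (g2 + gv)" unfolding a_def b_def by simp_all
    have zab: "z = a @\<^sub>v b" unfolding a_def b_def using zc by simp
    have a': "a = x1 @\<^sub>v y1" unfolding x1_def y1_def using ac by simp
    have b': "b = x2 @\<^sub>v y2" unfolding x2_def y2_def using bc by simp
    have x1c: "x1 \<in> carrier_vec g1" and y1c: "y1 \<in> carrier_vec gv" and x2c: "x2 \<in> carrier_vec g2"
      and y2c: "y2 \<in> carrier_vec gv" unfolding x1_def y1_def x2_def y2_def by simp_all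
    have z': "z = (x1 @\<^sub>v y1) @\<^sub>v (x2 @\<^sub>v y2)" using zab a' b' by simp
    have xy1: "x1 @\<^sub>v y1 \<in> carrier_vec (g1 + gv)" using x1c y1c by simp
    have xy2: "x2 @\<^sub>v y2 \<in> carrier_vec (g2 + gv)" using x2c y2c by simp
    have bnd: "(\<forall>t<g1. \<bar>x1 $ t\<bar> \<le> 1) \<and> (\<forall>t<gv. \<bar>y1 $ t\<bar> \<le> 1) \<and> (\<forall>t<g2. \<bar>x2 $ t\<bar> \<le> 1) \<and> (\<forall>t<gv. \<bar>y2 $ t\<bar> \<le> 1)"
      using zb unfolding z' bound_split[OF xy1 xy2] bound_split[OF x1c y1c] bound_split[OF x2c y2c] by blast
    have "AN mi N nu z0 *\<^sub>v x1 = bN mi N nu ubar \<and> Av *\<^sub>v y1 = bv \<and>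
        AN mj N nu z0 *\<^sub>v x2 = bN mj N nu ubar \<and> Av *\<^sub>v y2 = bv \<and> Y1 x1 y1 = Y2 x2 y2"
      using ze unfolding z' eqv[OF x1c y1c x2c y2c] .
    then have "Phi x1 y1 x2 y2" unfolding Phi_def using bnd x1c y1c x2c y2c by blast
    then show "\<exists>x1 y1 x2 y2. Phi x1 y1 x2 y2" by blast
  next
    assume "\<exists>x1 y1 x2 y2. Phi x1 y1 x2 y2"
    then obtain x1 y1 x2 y2 where p: "Phi x1 y1 x2 y2" by blast
    have x1c: "x1 \<in> carrier_vec g1" and y1c: "y1 \<in> carrier_vec gv" and x2c: "x2 \<in> carrier_vec g2"
      and y2c: "y2 \<in> carrier_vec gv" using p unfolding Phi_def by blast+
    have xy1: "x1 @\<^sub>v y1 \<in> carrier_vec (g1 + gv)" using x1c y1c by simp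
    have xy2: "x2 @\<^sub>v y2 \<in> carrier_vec (g2 + gv)" using x2c y2c by simp
    let ?z = "(x1 @\<^sub>v y1) @\<^sub>v (x2 @\<^sub>v y2)"
    have zc: "?z \<in> carrier_vec ((g1 + gv) + (g2 + gv))" using xy1 xy2 by simp
    have zb: "\<forall>t<(g1 + gv) + (g2 + gv). \<bar>?z $ t\<bar> \<le> 1"
      unfolding bound_split[OF xy1 xy2] bound_split[OF x1c y1c] bound_split[OF x2c y2c]
      using p unfolding Phi_def by blast
    have ze: "?w = ?c + ?M *\<^sub>v ?z"
      unfolding eqv[OF x1c y1c x2c y2c] using p unfolding Phi_def by blast
    show "\<exists>z. z \<in> carrier_vec ((g1 + gv) + (g2 + gv)) \<and> (\<forall>t<(g1 + gv) + (g2 + gv). \<bar>z $ t\<bar> \<le> 1) \<and> ?w = ?c + ?M *\<^sub>v z"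
      using zc zb ze by blast
  qed
qed

lemma pair: "(YN mi N nu Gv cv Av bv ubar \<inter> YN mj N nu Gv cv Av bv ubar = {}) \<longleftrightarrow>
  (Nij mi mj N nu @\<^sub>r Omegaij mi mj N nu bv) *\<^sub>v ubar \<notin> Yij mi mj N nu Gv cv Av bv"
  using inter_iff Yij_iff by blast

end

lemma pair_outer:
  assumes "mctx mi ny nu nv n1 nw1 r1 gz1 qz1 ga1 qa1" "mctx mj ny nu nv n2 nw2 r2 gz2 qz2 ga2 qa2"
    "Gv \<in> carrier_mat nv gv" "cv \<in> carrier_vec nv" "Av \<in> carrier_mat qv gv" "bv \<in> carrier_vec qv"
    "ubar \<in> carrier_vec ((N + 1) * nu)"
  shows "(YN mi N nu Gv cv Av bv ubar \<inter> YN mj N nu Gv cv Av bv ubar = {}) \<longleftrightarrow>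
  (Nij mi mj N nu @\<^sub>r Omegaij mi mj N nu bv) *\<^sub>v ubar \<notin> Yij mi mj N nu Gv cv Av bv"
  by (rule pctx.pair[OF pctx.intro[OF assms(1,2) pctx_axioms.intro[OF assms(3-7)]]])

lemma wf_mctx: "wf_model ny nu nv m \<Longrightarrow> \<exists>n nw r gz qz ga qa. mctx m ny nu nv n nw r gz qz ga qa"
  unfolding wf_model_def mctx_def by blast

theorem theorem1:
  fixes nm N nu ny nv gv qv :: nat
    and mdl :: "nat \<Rightarrow> dmodel"
    and U :: "real vec set"
    and Gv Av :: "real mat" and cv bv :: "real vec"
    and ubar :: "real vec"
  assumes models: "\<forall>i \<in> {1..nm}. wf_model ny nu nv (mdl i)"
    and V: "Gv \<in> carrier_mat nv gv" "cv \<in> carrier_vec nv"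
           "Av \<in> carrier_mat qv gv" "bv \<in> carrier_vec qv"
    and u: "ubar \<in> Ubar N nu U"
  shows "(\<forall>i \<in> {1..nm}. \<forall>j \<in> {1..nm}. i \<noteq> j \<longrightarrow>
            YN (mdl i) N nu Gv cv Av bv ubar \<inter> YN (mdl j) N nu Gv cv Av bv ubar = {})
     \<longleftrightarrow> (\<forall>i \<in> {1..nm}. \<forall>j \<in> {1..nm}. i \<noteq> j \<longrightarrow>
            (Nij (mdl i) (mdl j) N nu @\<^sub>r Omegaij (mdl i) (mdl j) N nu bv) *\<^sub>v ubar
              \<notin> Yij (mdl i) (mdl j) N nu Gv cv Av bv)"
proof -
  have ub: "ubar \<in> carrier_vec ((N + 1) * nu)" using u unfolding Ubar_def by blast
  have key: "\<And>i j. i \<in> {1..nm} \<Longrightarrow> j \<in> {1..nm} \<Longrightarrow>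
     (YN (mdl i) N nu Gv cv Av bv ubar \<inter> YN (mdl j) N nu Gv cv Av bv ubar = {}) \<longleftrightarrow>
     (Nij (mdl i) (mdl j) N nu @\<^sub>r Omegaij (mdl i) (mdl j) N nu bv) *\<^sub>v ubar \<notin> Yij (mdl i) (mdl j) N nu Gv cv Av bv"
  proof -
    fix i j assume i: "i \<in> {1..nm}" and j: "j \<in> {1..nm}"
    obtain n1 nw1 r1 gz1 qz1 ga1 qa1 where I: "mctx (mdl i) ny nu nv n1 nw1 r1 gz1 qz1 ga1 qa1"
      using wf_mctx models i by blast
    obtain n2 nw2 r2 gz2 qz2 ga2 qa2 where J: "mctx (mdl j) ny nu nv n2 nw2 r2 gz2 qz2 ga2 qa2"
      using wf_mctx models j by blast
    show "(YN (mdl i) N nu Gv cv Av bv ubar \<inter> YN (mdl j) N nu Gv cv Av bv ubar = {}) \<longleftrightarrow>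
     (Nij (mdl i) (mdl j) N nu @\<^sub>r Omegaij (mdl i) (mdl j) N nu bv) *\<^sub>v ubar \<notin> Yij (mdl i) (mdl j) N nu Gv cv Av bv"
      by (rule pair_outer[OF I J V ub])
  qed
  show ?thesis using key by blast
qed


end
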